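(* Let $p$ be a prime, $X$ a countable set, and let $A$ be a norm-closed sub-$\mathbb{Z}_p$-algebra of $\mathcal{B}(\mathbb{Q}_p(X))$ containing the identity. Let $e,f\in A$ be idempotents with $e\ne0$ and $\|e-f\|<1/\|e\|$. Then there is an invertible element $g\in A$ (with $g^{-1}\in A$) such that $g^{-1}eg=f$.
   Context: $\mathbb{Q}_p(X)$ is the set of maps $\xi:X\to\mathbb{Q}_p$ with $|\xi(i)|_p\le1$ for all but finitely many $i$, a $\mathbb{Z}_p$-module under coordinatewise operations, with the topology $\tau$ in which $A\subseteq\mathbb{Q}_p(X)$ is open iff for every finite $P\subseteq X$ the set $A\cap\big(\prod_{i\in P}\mathbb{Q}_p\times\prod_{j\in X\setminus P}\mathbb{Z}_p\big)$ is open in the product topology. $\mathcal{B}(\mathbb{Q}_p(X))$ is the algebra of $\tau$-continuous $\mathbb{Z}_p$-linear maps, with operator norm $\|T\|=\sup_{\|\xi\|\le1}\|T\xi\|$, $\|\xi\|=\max_i|\xi(i)|_p$. *)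

theory Defs
  imports "HOL-Analysis.Analysis"
begin

text \<open>An element of Q_p is represented by its (unique) digit sequence
  a :: int => nat, x = sum_k a(k) p^k, with 0 <= a(k) < p and a(k) = 0 for
  all sufficiently negative k.\<close>

definition padic :: "nat \<Rightarrow> (int \<Rightarrow> nat) set" where
  "padic p = {a. (\<forall>k. a k < p) \<and> (\<exists>N. \<forall>k<N. a k = 0)}"

definition padic_int :: "nat \<Rightarrow> (int \<Rightarrow> nat) set" where
  "padic_int p = {a \<in> padic p. \<forall>k<0. a k = 0}"

definition padic_zero :: "int \<Rightarrow> nat" where
  "padic_zero = (\<lambda>_. 0)"

definition padic_low :: "(int \<Rightarrow> nat) \<Rightarrow> int" where
  "padic_low a = (SOME N. \<forall>k<N. a k = 0)"

text \<open>The representative of x mod p^n Z_p in Z[1/p] \<inter> [0,p^n).\<close>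
definition padic_trunc :: "nat \<Rightarrow> (int \<Rightarrow> nat) \<Rightarrow> int \<Rightarrow> rat" where
  "padic_trunc p a n = (\<Sum>k\<in>{padic_low a..<n}. of_nat (a k) * (of_nat p) powi k)"

definition rat_mod :: "rat \<Rightarrow> rat \<Rightarrow> rat" where
  "rat_mod r m = r - m * of_int \<lfloor>r / m\<rfloor>"

text \<open>Recover the digits from the sequence of truncations t n = x mod p^n.\<close>
definition padic_of_truncs :: "nat \<Rightarrow> (int \<Rightarrow> rat) \<Rightarrow> int \<Rightarrow> nat" where
  "padic_of_truncs p t = (\<lambda>k. nat \<lfloor>(t (k + 1) - t k) / (of_nat p) powi k\<rfloor>)"

definition padic_add :: "nat \<Rightarrow> (int \<Rightarrow> nat) \<Rightarrow> (int \<Rightarrow> nat) \<Rightarrow> int \<Rightarrow> nat" where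
  "padic_add p x y = padic_of_truncs p
     (\<lambda>n. rat_mod (padic_trunc p x n + padic_trunc p y n) ((of_nat p) powi n))"

definition padic_neg :: "nat \<Rightarrow> (int \<Rightarrow> nat) \<Rightarrow> int \<Rightarrow> nat" where
  "padic_neg p x = padic_of_truncs p
     (\<lambda>n. rat_mod (- padic_trunc p x n) ((of_nat p) powi n))"

definition padic_mul :: "nat \<Rightarrow> (int \<Rightarrow> nat) \<Rightarrow> (int \<Rightarrow> nat) \<Rightarrow> int \<Rightarrow> nat" where
  "padic_mul p x y = padic_of_truncs p
     (\<lambda>n. rat_mod (padic_trunc p x (n - padic_low y) * padic_trunc p y (n - padic_low x))
                  ((of_nat p) powi n))"

definition padic_ord :: "(int \<Rightarrow> nat) \<Rightarrow> int" where
  "padic_ord a = (THE k. a k \<noteq> 0 \<and> (\<forall>j<k. a j = 0))"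

definition padic_norm :: "nat \<Rightarrow> (int \<Rightarrow> nat) \<Rightarrow> real" where
  "padic_norm p a = (if a = padic_zero then 0 else (real p) powi (- padic_ord a))"

definition padic_dist :: "nat \<Rightarrow> (int \<Rightarrow> nat) \<Rightarrow> (int \<Rightarrow> nat) \<Rightarrow> real" where
  "padic_dist p x y = padic_norm p (padic_add p x (padic_neg p y))"

definition Qp_top :: "nat \<Rightarrow> (int \<Rightarrow> nat) topology" where
  "Qp_top p = topology (\<lambda>U. U \<subseteq> padic p \<and>
     (\<forall>x\<in>U. \<exists>\<epsilon>>0. \<forall>y\<in>padic p. padic_dist p y x < \<epsilon> \<longrightarrow> y \<in> U))"

type_synonym 'x vec = "'x \<Rightarrow> int \<Rightarrow> nat"
type_synonym 'x oper = "'x vec \<Rightarrow> 'x vec"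

definition QpX :: "nat \<Rightarrow> 'x set \<Rightarrow> 'x vec set" where
  "QpX p X = {\<xi> \<in> PiE X (\<lambda>_. padic p). finite {i \<in> X. padic_norm p (\<xi> i) > 1}}"

definition box :: "nat \<Rightarrow> 'x set \<Rightarrow> 'x set \<Rightarrow> 'x vec set" where
  "box p X P = {\<xi> \<in> PiE X (\<lambda>_. padic p). \<forall>j \<in> X - P. \<xi> j \<in> padic_int p}"

definition tau_open :: "nat \<Rightarrow> 'x set \<Rightarrow> 'x vec set \<Rightarrow> bool" where
  "tau_open p X U \<longleftrightarrow> U \<subseteq> QpX p X \<and>
     (\<forall>P. finite P \<and> P \<subseteq> X \<longrightarrow>
        openin (subtopology (product_topology (\<lambda>i. Qp_top p) X) (box p X P)) (U \<inter> box p X P))"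

definition tau_continuous :: "nat \<Rightarrow> 'x set \<Rightarrow> 'x oper \<Rightarrow> bool" where
  "tau_continuous p X T \<longleftrightarrow>
     (\<forall>U. tau_open p X U \<longrightarrow> tau_open p X {\<xi> \<in> QpX p X. T \<xi> \<in> U})"

definition vadd :: "nat \<Rightarrow> 'x set \<Rightarrow> 'x vec \<Rightarrow> 'x vec \<Rightarrow> 'x vec" where
  "vadd p X \<xi> \<eta> = (\<lambda>i\<in>X. padic_add p (\<xi> i) (\<eta> i))"

definition vneg :: "nat \<Rightarrow> 'x set \<Rightarrow> 'x vec \<Rightarrow> 'x vec" where
  "vneg p X \<xi> = (\<lambda>i\<in>X. padic_neg p (\<xi> i))"

definition vsmul :: "nat \<Rightarrow> 'x set \<Rightarrow> (int \<Rightarrow> nat) \<Rightarrow> 'x vec \<Rightarrow> 'x vec" where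
  "vsmul p X c \<xi> = (\<lambda>i\<in>X. padic_mul p c (\<xi> i))"

definition vzero :: "'x set \<Rightarrow> 'x vec" where
  "vzero X = (\<lambda>i\<in>X. padic_zero)"

definition vnorm :: "nat \<Rightarrow> 'x set \<Rightarrow> 'x vec \<Rightarrow> real" where
  "vnorm p X \<xi> = Sup (insert 0 ((\<lambda>i. padic_norm p (\<xi> i)) ` X))"

definition Bops :: "nat \<Rightarrow> 'x set \<Rightarrow> 'x oper set" where
  "Bops p X = {T. T \<in> extensional (QpX p X) \<and> T ` QpX p X \<subseteq> QpX p X \<and>
     (\<forall>\<xi>\<in>QpX p X. \<forall>\<eta>\<in>QpX p X. T (vadd p X \<xi> \<eta>) = vadd p X (T \<xi>) (T \<eta>)) \<and>
     (\<forall>c\<in>padic_int p. \<forall>\<xi>\<in>QpX p X. T (vsmul p X c \<xi>) = vsmul p X c (T \<xi>)) \<and>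
     tau_continuous p X T}"

definition op_norm :: "nat \<Rightarrow> 'x set \<Rightarrow> 'x oper \<Rightarrow> real" where
  "op_norm p X T = Sup (insert 0 {vnorm p X (T \<xi>) | \<xi>. \<xi> \<in> QpX p X \<and> vnorm p X \<xi> \<le> 1})"

definition op_add :: "nat \<Rightarrow> 'x set \<Rightarrow> 'x oper \<Rightarrow> 'x oper \<Rightarrow> 'x oper" where
  "op_add p X S T = (\<lambda>\<xi>\<in>QpX p X. vadd p X (S \<xi>) (T \<xi>))"

definition op_neg :: "nat \<Rightarrow> 'x set \<Rightarrow> 'x oper \<Rightarrow> 'x oper" where
  "op_neg p X T = (\<lambda>\<xi>\<in>QpX p X. vneg p X (T \<xi>))"

definition op_diff :: "nat \<Rightarrow> 'x set \<Rightarrow> 'x oper \<Rightarrow> 'x oper \<Rightarrow> 'x oper" where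
  "op_diff p X S T = op_add p X S (op_neg p X T)"

definition op_smul :: "nat \<Rightarrow> 'x set \<Rightarrow> (int \<Rightarrow> nat) \<Rightarrow> 'x oper \<Rightarrow> 'x oper" where
  "op_smul p X c T = (\<lambda>\<xi>\<in>QpX p X. vsmul p X c (T \<xi>))"

definition op_comp :: "nat \<Rightarrow> 'x set \<Rightarrow> 'x oper \<Rightarrow> 'x oper \<Rightarrow> 'x oper" where
  "op_comp p X S T = (\<lambda>\<xi>\<in>QpX p X. S (T \<xi>))"

definition op_id :: "nat \<Rightarrow> 'x set \<Rightarrow> 'x oper" where
  "op_id p X = (\<lambda>\<xi>\<in>QpX p X. \<xi>)"

definition op_zero :: "nat \<Rightarrow> 'x set \<Rightarrow> 'x oper" where
  "op_zero p X = (\<lambda>\<xi>\<in>QpX p X. vzero X)"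

definition closed_unital_subalgebra :: "nat \<Rightarrow> 'x set \<Rightarrow> 'x oper set \<Rightarrow> bool" where
  "closed_unital_subalgebra p X A \<longleftrightarrow>
     A \<subseteq> Bops p X \<and> op_id p X \<in> A \<and>
     (\<forall>S\<in>A. \<forall>T\<in>A. op_add p X S T \<in> A \<and> op_comp p X S T \<in> A) \<and>
     (\<forall>c\<in>padic_int p. \<forall>T\<in>A. op_smul p X c T \<in> A) \<and>
     (\<forall>Ts T. (\<forall>n. Ts n \<in> A) \<and> T \<in> Bops p X \<and>
             (\<lambda>n. op_norm p X (op_diff p X (Ts n) T)) \<longlonglongrightarrow> 0 \<longrightarrow> T \<in> A)"

end

theory Submission
  imports Defs
begin

definition Pw :: "nat \<Rightarrow> int \<Rightarrow> rat" where "Pw p n = (of_nat p) powi n"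

definition pcong :: "nat \<Rightarrow> int \<Rightarrow> rat \<Rightarrow> rat \<Rightarrow> bool" where
  "pcong p n a b \<longleftrightarrow> (\<exists>z::int. a - b = of_int z * Pw p n)"

definition lowb :: "(int \<Rightarrow> nat) \<Rightarrow> int \<Rightarrow> bool" where
  "lowb x L \<longleftrightarrow> (\<forall>k<L. x k = 0)"

definition agree :: "int \<Rightarrow> (int \<Rightarrow> nat) \<Rightarrow> (int \<Rightarrow> nat) \<Rightarrow> bool" where
  "agree n x y \<longleftrightarrow> (\<forall>k<n. x k = y k)"

lemma Pw_pos: "p > 0 \<Longrightarrow> Pw p n > 0"
  unfolding Pw_def by simp

lemma Pw_add: "p > 0 \<Longrightarrow> Pw p (a + b) = Pw p a * Pw p b"
  unfolding Pw_def by (simp add: power_int_add)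

lemma Pw_succ: "p > 0 \<Longrightarrow> Pw p (n + 1) = Pw p n * of_nat p"
  unfolding Pw_def by (simp add: power_int_add)

lemma Pw_nat: "p > 0 \<Longrightarrow> m \<le> n \<Longrightarrow> Pw p n = Pw p m * of_nat (p ^ nat (n - m))"
proof -
  assume "p > 0" "m \<le> n"
  then have "Pw p n = Pw p (m + (n - m))" by simp
  also have "\<dots> = Pw p m * Pw p (n - m)" using \<open>p>0\<close> by (rule Pw_add)
  also have "Pw p (n - m) = of_nat (p ^ nat (n - m))" unfolding Pw_def
    using \<open>m \<le> n\<close> by (simp add: power_int_def)
  finally show ?thesis .
qed

lemma Pw_mono: "p > 0 \<Longrightarrow> m \<le> n \<Longrightarrow> Pw p m \<le> Pw p n"
  unfolding Pw_def by (rule power_int_increasing) auto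

lemma pcong_refl[simp]: "pcong p n a a"
  unfolding pcong_def by (rule exI[of _ 0]) simp

lemma pcong_sym: "pcong p n a b \<Longrightarrow> pcong p n b a"
  unfolding pcong_def by (metis minus_diff_eq mult_minus_left of_int_minus)

lemma pcong_trans: "pcong p n a b \<Longrightarrow> pcong p n b c \<Longrightarrow> pcong p n a c"
  unfolding pcong_def
proof (elim exE)
  fix z w assume "a - b = of_int z * Pw p n" "b - c = of_int w * Pw p n"
  then have "a - c = of_int (z + w) * Pw p n" by (simp add: algebra_simps)
  then show "\<exists>z. a - c = of_int z * Pw p n" by blast
qed

lemma pcong_add: "pcong p n a b \<Longrightarrow> pcong p n c d \<Longrightarrow> pcong p n (a + c) (b + d)"
  unfolding pcong_def
proof (elim exE)
  fix z w assume "a - b = of_int z * Pw p n" "c - d = of_int w * Pw p n"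
  then have "(a + c) - (b + d) = of_int (z + w) * Pw p n" by (simp add: algebra_simps)
  then show "\<exists>z. (a + c) - (b + d) = of_int z * Pw p n" by blast
qed

lemma pcong_neg: "pcong p n a b \<Longrightarrow> pcong p n (- a) (- b)"
  unfolding pcong_def
proof (elim exE)
  fix z assume "a - b = of_int z * Pw p n"
  then have "(- a) - (- b) = of_int (- z) * Pw p n" by (simp add: algebra_simps)
  then show "\<exists>z. (- a) - (- b) = of_int z * Pw p n" by blast
qed

lemma pcong_diff: "pcong p n a b \<Longrightarrow> pcong p n c d \<Longrightarrow> pcong p n (a - c) (b - d)"
  using pcong_add[OF _ pcong_neg, of p n a b c d] by simp

lemma pcong_0_iff: "pcong p n a b \<longleftrightarrow> pcong p n (a - b) 0"
  unfolding pcong_def by simp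

lemma pcong_mono: "p > 0 \<Longrightarrow> m \<le> n \<Longrightarrow> pcong p n a b \<Longrightarrow> pcong p m a b"
  unfolding pcong_def
proof (elim exE)
  fix z assume "p > 0" "m \<le> n" "a - b = of_int z * Pw p n"
  then have "a - b = of_int (z * int (p ^ nat (n - m))) * Pw p m"
    by (simp add: Pw_nat[of p m n])
  then show "\<exists>z. a - b = of_int z * Pw p m" by blast
qed

lemma pcong_mult0: "p > 0 \<Longrightarrow> pcong p a r 0 \<Longrightarrow> pcong p b s 0 \<Longrightarrow> pcong p (a + b) (r * s) 0"
  unfolding pcong_def
proof (elim exE)
  fix z w assume "p > 0" "r - 0 = of_int z * Pw p a" "s - 0 = of_int w * Pw p b"
  then have "r * s - 0 = of_int (z * w) * Pw p (a + b)" by (simp add: Pw_add)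
  then show "\<exists>z. r * s - 0 = of_int z * Pw p (a + b)" by blast
qed

lemma pcong_mult: "p > 0 \<Longrightarrow> pcong p a r r' \<Longrightarrow> pcong p b s 0 \<Longrightarrow> pcong p (a + b) (r * s) (r' * s)"
  unfolding pcong_def
proof (elim exE)
  fix z w assume "p > 0" "r - r' = of_int z * Pw p a" "s - 0 = of_int w * Pw p b"
  then have "r * s - r' * s = of_int (z * w) * Pw p (a + b)"
    by (simp add: Pw_add left_diff_distrib[symmetric])
  then show "\<exists>z. r * s - r' * s = of_int z * Pw p (a + b)" by blast
qed

lemma pcong_mult': "p > 0 \<Longrightarrow> pcong p a s 0 \<Longrightarrow> pcong p b r r' \<Longrightarrow> pcong p (a + b) (s * r) (s * r')"
  unfolding pcong_def
proof (elim exE)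
  fix z w assume "p > 0" "s - 0 = of_int z * Pw p a" "r - r' = of_int w * Pw p b"
  then have "s * r - s * r' = of_int (z * w) * Pw p (a + b)"
    by (simp add: Pw_add right_diff_distrib[symmetric])
  then show "\<exists>z. s * r - s * r' = of_int z * Pw p (a + b)" by blast
qed

lemma pcong_intmult: "pcong p n a 0 \<Longrightarrow> pcong p n (of_int z * a) 0"
  unfolding pcong_def by (metis diff_zero mult.assoc of_int_mult)

lemma pcong_Pw: "p > 0 \<Longrightarrow> m \<le> n \<Longrightarrow> pcong p m (Pw p n) 0"
  unfolding pcong_def by (rule exI[of _ "int (p ^ nat (n - m))"]) (simp add: Pw_nat[of p m n])

lemma rat_mod_bounds: "(m::rat) > 0 \<Longrightarrow> 0 \<le> rat_mod r m \<and> rat_mod r m < m"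
proof -
  assume m: "m > 0"
  have a: "of_int \<lfloor>r / m\<rfloor> \<le> r / m" and b: "r / m < of_int \<lfloor>r / m\<rfloor> + 1" by linarith+
  from a m have "m * of_int \<lfloor>r / m\<rfloor> \<le> r" by (simp add: le_divide_eq mult.commute)
  moreover from b m have "r < m * of_int \<lfloor>r / m\<rfloor> + m" by (simp add: divide_less_eq algebra_simps)
  ultimately show ?thesis unfolding rat_mod_def by simp
qed

lemma rat_mod_pcong: "p > 0 \<Longrightarrow> pcong p n (rat_mod r (Pw p n)) r"
  unfolding pcong_def rat_mod_def
  by (rule exI[of _ "- \<lfloor>r / Pw p n\<rfloor>"]) (simp add: algebra_simps)

lemma rat_mod_eq: "p > 0 \<Longrightarrow> pcong p n a b \<Longrightarrow> rat_mod a (Pw p n) = rat_mod b (Pw p n)"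
  unfolding pcong_def
proof (elim exE)
  fix z assume p: "p > 0" and z: "a - b = of_int z * Pw p n"
  have pos: "Pw p n > 0" using p by (rule Pw_pos)
  have "a = b + of_int z * Pw p n" using z by simp
  then have "a / Pw p n = b / Pw p n + of_int z" using pos by (simp add: field_simps)
  then have "\<lfloor>a / Pw p n\<rfloor> = \<lfloor>b / Pw p n\<rfloor> + z" by simp
  then show ?thesis unfolding rat_mod_def using z by (simp add: algebra_simps)
qed

lemma rat_mod_id: "0 \<le> a \<Longrightarrow> a < (m::rat) \<Longrightarrow> rat_mod a m = a"
proof -
  assume "0 \<le> a" "a < m"
  then have "0 \<le> a / m" "a / m < 1" by (auto simp: field_simps)
  then have "\<lfloor>a / m\<rfloor> = 0" by linarith
  then show ?thesis unfolding rat_mod_def by simp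
qed

lemma pcong_bounded_eq:
  "p > 0 \<Longrightarrow> 0 \<le> a \<Longrightarrow> a < Pw p n \<Longrightarrow> 0 \<le> b \<Longrightarrow> b < Pw p n \<Longrightarrow> pcong p n a b \<Longrightarrow> a = b"
  by (metis rat_mod_eq rat_mod_id)

lemma rat_mod_eq_iff: "p > 0 \<Longrightarrow> rat_mod a (Pw p n) = rat_mod b (Pw p n) \<longleftrightarrow> pcong p n a b"
  by (metis pcong_sym pcong_trans rat_mod_eq rat_mod_pcong)


abbreviation Tr where "Tr p x n \<equiv> padic_trunc p x n"

lemma lowb_mono: "lowb x L \<Longrightarrow> L' \<le> L \<Longrightarrow> lowb x L'"
  unfolding lowb_def by auto

lemma padic_low_valid: "x \<in> padic p \<Longrightarrow> lowb x (padic_low x)"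
proof -
  assume "x \<in> padic p"
  then have "\<exists>N. \<forall>k<N. x k = 0" unfolding padic_def by blast
  then have "\<forall>k<(SOME N. \<forall>k<N. x k = 0). x k = 0" by (rule someI_ex)
  then show ?thesis unfolding lowb_def padic_low_def .
qed

lemma lowb_max: "lowb x a \<Longrightarrow> lowb x b \<Longrightarrow> lowb x (max a b)"
  by (simp add: max_def)

lemma padic_lowb_ex: "x \<in> padic p \<Longrightarrow> \<exists>L. lowb x L"
  using padic_low_valid by blast

lemma padic_digit_less: "x \<in> padic p \<Longrightarrow> x k < p"
  unfolding padic_def by auto

lemma sum_lowb:
  assumes "lowb x L" "L' \<le> L"
  shows "(\<Sum>k\<in>{L'..<n}. of_nat (x k) * c k) = (\<Sum>k\<in>{L..<n}. of_nat (x k) * (c k :: rat))"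
proof (cases "n \<le> L")
  case True
  then have "(\<Sum>k\<in>{L'..<n}. of_nat (x k) * c k) = 0"
    using assms by (intro sum.neutral) (auto simp: lowb_def)
  then show ?thesis using True by simp
next
  case False
  show ?thesis
    by (rule sum.mono_neutral_right) (use assms False in \<open>auto simp: lowb_def\<close>)
qed

lemma trunc_eq:
  assumes "x \<in> padic p" "lowb x L"
  shows "Tr p x n = (\<Sum>k\<in>{L..<n}. of_nat (x k) * Pw p k)"
proof -
  define lo where "lo = padic_low x"
  have v: "lowb x lo" unfolding lo_def using assms(1) by (rule padic_low_valid)
  have "Tr p x n = (\<Sum>k\<in>{lo..<n}. of_nat (x k) * Pw p k)"
    unfolding padic_trunc_def lo_def Pw_def ..
  also have "\<dots> = (\<Sum>k\<in>{min L lo..<n}. of_nat (x k) * Pw p k)"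
    using sum_lowb[OF v, of "min L lo"] by simp
  also have "\<dots> = (\<Sum>k\<in>{L..<n}. of_nat (x k) * Pw p k)"
    using sum_lowb[OF assms(2), of "min L lo"] by simp
  finally show ?thesis .
qed

lemma trunc_zero: "x \<in> padic p \<Longrightarrow> lowb x L \<Longrightarrow> n \<le> L \<Longrightarrow> Tr p x n = 0"
  by (subst trunc_eq[of x p L]) auto

lemma trunc_succ:
  assumes "x \<in> padic p"
  shows "Tr p x (n + 1) = Tr p x n + of_nat (x n) * Pw p n"
proof -
  obtain L where L: "lowb x L" using padic_lowb_ex[OF assms] by blast
  define L' where "L' = min L n"
  have L': "lowb x L'" using L unfolding L'_def by (rule lowb_mono) simp
  have "{L'..<n+1} = insert n {L'..<n}" unfolding L'_def by auto
  then show ?thesis using trunc_eq[OF assms L', of n] trunc_eq[OF assms L', of "n+1"]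
    by (simp add: add.commute)
qed

lemma nat_offset_induct:
  assumes "\<And>n. n \<le> L \<Longrightarrow> P n" "\<And>n. L \<le> n \<Longrightarrow> P n \<Longrightarrow> P (n + 1)"
  shows "P (n::int)"
proof (cases "n \<le> L")
  case True then show ?thesis using assms(1) by blast
next
  case False
  have "\<forall>k::nat. P (L + int k)"
  proof
    fix k show "P (L + int k)"
    proof (induction k)
      case 0 then show ?case using assms(1) by simp
    next
      case (Suc k)
      then have "P (L + int k + 1)" using assms(2)[of "L + int k"] by simp
      then show ?case by (simp add: algebra_simps)
    qed
  qed
  then have "P (L + int (nat (n - L)))" by blast
  then show ?thesis using False by simp
qed

lemma trunc_bounds:
  assumes "p > 0" "x \<in> padic p"
  shows "0 \<le> Tr p x n \<and> Tr p x n < Pw p n"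
proof -
  obtain L where L: "lowb x L" using padic_lowb_ex[OF assms(2)] by blast
  show ?thesis
  proof (induction n rule: nat_offset_induct[where L = L])
    case (1 n) then show ?case using trunc_zero[OF assms(2) L] Pw_pos[OF assms(1)] by simp
  next
    case (2 n)
    have "x n + 1 \<le> p" using padic_digit_less[OF assms(2), of n] by simp
    then have "of_nat (x n) + 1 \<le> (of_nat p :: rat)" by (metis of_nat_1 of_nat_add of_nat_le_iff)
    then have d: "of_nat (x n) \<le> (of_nat p - 1 :: rat)" by linarith
    have P: "Pw p (n + 1) = Pw p n * of_nat p" using assms(1) by (rule Pw_succ)
    have pos: "Pw p n > 0" using assms(1) by (rule Pw_pos)
    have "of_nat (x n) * Pw p n \<le> (of_nat p - 1) * Pw p n"
      using d pos by (intro mult_right_mono) auto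
    then show ?case using 2 trunc_succ[OF assms(2), of n] P pos
      by (auto simp: algebra_simps)
  qed
qed

lemma trunc_cong:
  assumes "p > 0" "x \<in> padic p" "m \<le> n"
  shows "pcong p m (Tr p x n) (Tr p x m)"
proof -
  have "m \<le> n \<longrightarrow> pcong p m (Tr p x n) (Tr p x m)"
  proof (induction n rule: nat_offset_induct[where L = m])
    case (1 n) then show ?case by (cases "n = m") auto
  next
    case (2 n)
    have "pcong p m (of_int (int (x n)) * Pw p n) 0"
      by (rule pcong_intmult) (rule pcong_Pw[OF assms(1) 2(1)])
    then have "pcong p m (Tr p x n + of_nat (x n) * Pw p n) (Tr p x m + 0)"
      using 2 by (intro pcong_add) auto
    then show ?case using trunc_succ[OF assms(2), of n] by simp
  qed
  then show ?thesis using assms(3) by blast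
qed

lemma trunc_cong2:
  assumes "p > 0" "x \<in> padic p" "m \<le> a" "m \<le> b"
  shows "pcong p m (Tr p x a) (Tr p x b)"
  using trunc_cong[OF assms(1,2,3)] trunc_cong[OF assms(1,2,4)] pcong_sym pcong_trans by blast

lemma trunc_in:
  assumes "p > 0" "x \<in> padic p" "lowb x L"
  shows "pcong p L (Tr p x n) 0"
proof (cases "n \<le> L")
  case True then show ?thesis using trunc_zero[OF assms(2,3)] by simp
next
  case False then show ?thesis
    using trunc_cong[OF assms(1,2), of L n] trunc_zero[OF assms(2,3), of L] by simp
qed

lemma trunc_rat_mod:
  assumes "p > 0" "x \<in> padic p" "m \<le> n"
  shows "Tr p x m = rat_mod (Tr p x n) (Pw p m)"
  using rat_mod_eq[OF assms(1) trunc_cong[OF assms]] rat_mod_id trunc_bounds[OF assms(1,2)]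
  by metis

lemma trunc_digit:
  assumes "p > 0" "x \<in> padic p"
  shows "of_nat (x n) = (Tr p x (n + 1) - Tr p x n) / Pw p n"
  using trunc_succ[OF assms(2), of n] Pw_pos[OF assms(1), of n] by simp

lemma trunc_inj:
  assumes "p > 0" "x \<in> padic p" "y \<in> padic p" "\<And>n. Tr p x n = Tr p y n"
  shows "x = y"
proof
  fix n
  have "(of_nat (x n) :: rat) = of_nat (y n)"
    using trunc_digit[OF assms(1,2)] trunc_digit[OF assms(1,3)] assms(4) by simp
  then show "x n = y n" by simp
qed

lemma agree_iff_trunc:
  assumes "p > 0" "x \<in> padic p" "y \<in> padic p"
  shows "agree n x y \<longleftrightarrow> Tr p x n = Tr p y n"
proof
  assume a: "agree n x y"
  obtain L1 where L1: "lowb x L1" using padic_lowb_ex[OF assms(2)] by blast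
  obtain L2 where L2: "lowb y L2" using padic_lowb_ex[OF assms(3)] by blast
  define L where "L = min L1 L2"
  have "lowb x L" "lowb y L" using L1 L2 unfolding L_def by (auto intro: lowb_mono)
  then show "Tr p x n = Tr p y n"
    using a unfolding trunc_eq[OF assms(2) \<open>lowb x L\<close>] trunc_eq[OF assms(3) \<open>lowb y L\<close>] agree_def
    by (intro sum.cong) auto
next
  assume e: "Tr p x n = Tr p y n"
  have tk: "Tr p x k = Tr p y k" if "k \<le> n" for k
    using trunc_rat_mod[OF assms(1,2) that] trunc_rat_mod[OF assms(1,3) that] e by simp
  show "agree n x y" unfolding agree_def
  proof (intro allI impI)
    fix k assume "k < n"
    then have "(of_nat (x k) :: rat) = of_nat (y k)"
      using trunc_digit[OF assms(1,2)] trunc_digit[OF assms(1,3)] tk[of k] tk[of "k+1"] by simp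
    then show "x k = y k" by simp
  qed
qed

lemma of_truncs:
  assumes p: "p > 1"
    and b: "\<And>n. 0 \<le> t n \<and> t n < Pw p n"
    and c: "\<And>n. pcong p n (t (n + 1)) (t n)"
    and z: "\<And>n. n \<le> L \<Longrightarrow> t n = 0"
  shows "padic_of_truncs p t \<in> padic p \<and> lowb (padic_of_truncs p t) L \<and>
         (\<forall>n. Tr p (padic_of_truncs p t) n = t n)"
proof -
  define x where "x = padic_of_truncs p t"
  have p0: "p > 0" using p by simp
  have dig: "of_nat (x k) = (t (k + 1) - t k) / Pw p k \<and> x k < p" for k
  proof -
    obtain z where zk: "t (k + 1) - t k = of_int z * Pw p k" using c[of k] unfolding pcong_def by blast
    have pos: "Pw p k > 0" using p0 by (rule Pw_pos)
    have q: "(t (k + 1) - t k) / Pw p k = of_int z" using zk pos by simp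
    have x: "x k = nat z" unfolding x_def padic_of_truncs_def using q by (simp add: Pw_def)
    have "of_int z * Pw p k > - Pw p k" using zk b[of k] b[of "k+1"] by linarith
    then have "of_int z > (-1::rat)" using pos
      by (metis mult_minus_left mult_less_cancel_right_pos mult_1)
    then have z0: "z \<ge> 0" by simp
    have "of_int z * Pw p k < Pw p (k + 1)" using zk b[of k] b[of "k+1"] by linarith
    then have "of_int z * Pw p k < of_nat p * Pw p k" using Pw_succ[OF p0, of k] by (simp add: mult.commute)
    then have "of_int z < (of_nat p :: rat)" using pos by simp
    then have "z < int p" by linarith
    then show ?thesis using x z0 q by auto
  qed
  have xp: "x \<in> padic p"
  proof -
    have "\<forall>k<L. x k = 0"
    proof (intro allI impI)
      fix k assume "k < L"
      then have "t (k + 1) = 0" "t k = 0" using z by auto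
      then have "(of_nat (x k) :: rat) = 0" using dig[of k] by simp
      then show "x k = 0" by simp
    qed
    then show ?thesis unfolding padic_def using dig by blast
  qed
  have lb: "lowb x L" unfolding lowb_def
  proof (intro allI impI)
    fix k assume "k < L"
    then have "t (k + 1) = 0" "t k = 0" using z by auto
    then have "(of_nat (x k) :: rat) = 0" using dig[of k] by simp
    then show "x k = 0" by simp
  qed
  have "Tr p x n = t n" for n
  proof (induction n rule: nat_offset_induct[where L = L])
    case (1 n) then show ?case using trunc_zero[OF xp lb] z by simp
  next
    case (2 n)
    then show ?case using trunc_succ[OF xp, of n] dig[of n] Pw_pos[OF p0, of n] by simp
  qed
  then show ?thesis using xp lb unfolding x_def by blast
qed

lemma of_truncs_coh:
  assumes "p > 0" "\<And>n. pcong p n (A (n + 1)) (A n)"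
  shows "pcong p n (rat_mod (A (n + 1)) (Pw p (n + 1))) (rat_mod (A n) (Pw p n))"
proof -
  have "pcong p (n+1) (rat_mod (A (n + 1)) (Pw p (n + 1))) (A (n+1))" by (rule rat_mod_pcong[OF assms(1)])
  then have 1: "pcong p n (rat_mod (A (n + 1)) (Pw p (n + 1))) (A (n+1))" using pcong_mono[OF assms(1), of n "n+1"] by simp
  have 2: "pcong p n (A n) (rat_mod (A n) (Pw p n))" by (rule pcong_sym, rule rat_mod_pcong[OF assms(1)])
  show ?thesis using pcong_trans[OF pcong_trans[OF 1 assms(2)] 2] .
qed

lemma rat_mod_bounds_Pw: "p > 0 \<Longrightarrow> 0 \<le> rat_mod r (Pw p n) \<and> rat_mod r (Pw p n) < Pw p n"
  by (rule rat_mod_bounds) (rule Pw_pos)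

lemma rat_mod_zero[simp]: "rat_mod 0 m = 0"
  unfolding rat_mod_def by simp

lemma add_trunc:
  assumes p: "p > 1" and x: "x \<in> padic p" and y: "y \<in> padic p"
  shows "padic_add p x y \<in> padic p \<and> (\<forall>n. Tr p (padic_add p x y) n = rat_mod (Tr p x n + Tr p y n) (Pw p n))"
proof -
  have p0: "p > 0" using p by simp
  have eq: "padic_add p x y = padic_of_truncs p (\<lambda>n. rat_mod (Tr p x n + Tr p y n) (Pw p n))"
    unfolding padic_add_def Pw_def ..
  obtain L1 where L1: "lowb x L1" using padic_lowb_ex[OF x] by blast
  obtain L2 where L2: "lowb y L2" using padic_lowb_ex[OF y] by blast
  have "padic_of_truncs p (\<lambda>n. rat_mod (Tr p x n + Tr p y n) (Pw p n)) \<in> padic p \<and>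
        lowb (padic_of_truncs p (\<lambda>n. rat_mod (Tr p x n + Tr p y n) (Pw p n))) (min L1 L2) \<and>
        (\<forall>n. Tr p (padic_of_truncs p (\<lambda>n. rat_mod (Tr p x n + Tr p y n) (Pw p n))) n =
               rat_mod (Tr p x n + Tr p y n) (Pw p n))"
  proof (rule of_truncs[OF p])
    show "0 \<le> rat_mod (Tr p x n + Tr p y n) (Pw p n) \<and> rat_mod (Tr p x n + Tr p y n) (Pw p n) < Pw p n" for n
      by (rule rat_mod_bounds_Pw[OF p0])
    show "pcong p n (rat_mod (Tr p x (n + 1) + Tr p y (n + 1)) (Pw p (n + 1))) (rat_mod (Tr p x n + Tr p y n) (Pw p n))" for n
      by (rule of_truncs_coh[OF p0, where A = "\<lambda>n. Tr p x n + Tr p y n"])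
         (intro pcong_add trunc_cong p0 x y; simp)
    show "rat_mod (Tr p x n + Tr p y n) (Pw p n) = 0" if "n \<le> min L1 L2" for n
      using trunc_zero[OF x L1, of n] trunc_zero[OF y L2, of n] that by simp
  qed
  then show ?thesis unfolding eq by blast
qed

lemma neg_trunc:
  assumes p: "p > 1" and x: "x \<in> padic p"
  shows "padic_neg p x \<in> padic p \<and> (\<forall>n. Tr p (padic_neg p x) n = rat_mod (- Tr p x n) (Pw p n))"
proof -
  have p0: "p > 0" using p by simp
  have eq: "padic_neg p x = padic_of_truncs p (\<lambda>n. rat_mod (- Tr p x n) (Pw p n))"
    unfolding padic_neg_def Pw_def ..
  obtain L1 where L1: "lowb x L1" using padic_lowb_ex[OF x] by blast
  have "padic_of_truncs p (\<lambda>n. rat_mod (- Tr p x n) (Pw p n)) \<in> padic p \<and>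
        lowb (padic_of_truncs p (\<lambda>n. rat_mod (- Tr p x n) (Pw p n))) L1 \<and>
        (\<forall>n. Tr p (padic_of_truncs p (\<lambda>n. rat_mod (- Tr p x n) (Pw p n))) n =
               rat_mod (- Tr p x n) (Pw p n))"
  proof (rule of_truncs[OF p])
    show "0 \<le> rat_mod (- Tr p x n) (Pw p n) \<and> rat_mod (- Tr p x n) (Pw p n) < Pw p n" for n
      by (rule rat_mod_bounds_Pw[OF p0])
    show "pcong p n (rat_mod (- Tr p x (n + 1)) (Pw p (n + 1))) (rat_mod (- Tr p x n) (Pw p n))" for n
      by (rule of_truncs_coh[OF p0, where A = "\<lambda>n. - Tr p x n"])
         (intro pcong_neg trunc_cong p0 x; simp)
    show "rat_mod (- Tr p x n) (Pw p n) = 0" if "n \<le> L1" for n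
      using trunc_zero[OF x L1, of n] that by simp
  qed
  then show ?thesis unfolding eq by blast
qed

lemma mul_trunc:
  assumes p: "p > 1" and x: "x \<in> padic p" and y: "y \<in> padic p"
  shows "padic_mul p x y \<in> padic p \<and> (\<forall>n. Tr p (padic_mul p x y) n =
     rat_mod (Tr p x (n - padic_low y) * Tr p y (n - padic_low x)) (Pw p n))"
proof -
  have p0: "p > 0" using p by simp
  define lx where "lx = padic_low x"
  define ly where "ly = padic_low y"
  have Lx: "lowb x lx" unfolding lx_def using x by (rule padic_low_valid)
  have Ly: "lowb y ly" unfolding ly_def using y by (rule padic_low_valid)
  define A where "A n = Tr p x (n - ly) * Tr p y (n - lx)" for n
  have eq: "padic_mul p x y = padic_of_truncs p (\<lambda>n. rat_mod (A n) (Pw p n))"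
    unfolding padic_mul_def Pw_def A_def lx_def ly_def ..
  have coh: "pcong p n (A (n + 1)) (A n)" for n
  proof -
    have 1: "pcong p ((n - ly) + ly) (Tr p x (n + 1 - ly) * Tr p y (n + 1 - lx)) (Tr p x (n - ly) * Tr p y (n + 1 - lx))"
      by (rule pcong_mult[OF p0 trunc_cong[OF p0 x] trunc_in[OF p0 y Ly]]) simp
    have 2: "pcong p (lx + (n - lx)) (Tr p x (n - ly) * Tr p y (n + 1 - lx)) (Tr p x (n - ly) * Tr p y (n - lx))"
      by (rule pcong_mult'[OF p0 trunc_in[OF p0 x Lx] trunc_cong[OF p0 y]]) simp
    show ?thesis using pcong_trans[OF 1[simplified] 2[simplified]] unfolding A_def by (simp add: algebra_simps)
  qed
  have "padic_of_truncs p (\<lambda>n. rat_mod (A n) (Pw p n)) \<in> padic p \<and>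
        lowb (padic_of_truncs p (\<lambda>n. rat_mod (A n) (Pw p n))) (lx + ly) \<and>
        (\<forall>n. Tr p (padic_of_truncs p (\<lambda>n. rat_mod (A n) (Pw p n))) n = rat_mod (A n) (Pw p n))"
  proof (rule of_truncs[OF p])
    show "0 \<le> rat_mod (A n) (Pw p n) \<and> rat_mod (A n) (Pw p n) < Pw p n" for n
      by (rule rat_mod_bounds_Pw[OF p0])
    show "pcong p n (rat_mod (A (n + 1)) (Pw p (n + 1))) (rat_mod (A n) (Pw p n))" for n
      by (rule of_truncs_coh[OF p0 coh])
    show "rat_mod (A n) (Pw p n) = 0" if "n \<le> lx + ly" for n
      using trunc_zero[OF x Lx, of "n - ly"] that unfolding A_def by simp
  qed
  then show ?thesis unfolding eq A_def lx_def ly_def by blast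
qed

lemma mul_trunc_gen:
  assumes p: "p > 1" and x: "x \<in> padic p" and y: "y \<in> padic p"
    and Lx: "lowb x Lx" and Ly: "lowb y Ly" and a: "a \<ge> n - Ly" and b: "b \<ge> n - Lx"
  shows "Tr p (padic_mul p x y) n = rat_mod (Tr p x a * Tr p y b) (Pw p n)"
proof -
  have p0: "p > 0" using p by simp
  define lx where "lx = padic_low x"
  define ly where "ly = padic_low y"
  have lx: "lowb x lx" unfolding lx_def using x by (rule padic_low_valid)
  have ly: "lowb y ly" unfolding ly_def using y by (rule padic_low_valid)
  define M where "M = max Lx lx"
  define M' where "M' = max Ly ly"
  have M: "lowb x M" using Lx lx unfolding M_def by (rule lowb_max)
  have M': "lowb y M'" using Ly ly unfolding M'_def by (rule lowb_max)
  have 1: "pcong p ((n - M') + M') (Tr p x a * Tr p y b) (Tr p x (n - ly) * Tr p y b)"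
    by (rule pcong_mult[OF p0 trunc_cong2[OF p0 x] trunc_in[OF p0 y M']]) (use a in \<open>auto simp: M'_def\<close>)
  have 2: "pcong p (M + (n - M)) (Tr p x (n - ly) * Tr p y b) (Tr p x (n - ly) * Tr p y (n - lx))"
    by (rule pcong_mult'[OF p0 trunc_in[OF p0 x M] trunc_cong2[OF p0 y]]) (use b in \<open>auto simp: M_def\<close>)
  have "pcong p n (Tr p x a * Tr p y b) (Tr p x (n - ly) * Tr p y (n - lx))"
    using pcong_trans[OF 1[simplified] 2[simplified]] .
  then show ?thesis using mul_trunc[OF p x y] rat_mod_eq[OF p0] unfolding lx_def ly_def by metis
qed


lemma rm_add_l: "p > 0 \<Longrightarrow> rat_mod (rat_mod a (Pw p n) + b) (Pw p n) = rat_mod (a + b) (Pw p n)"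
  by (rule rat_mod_eq) (auto intro: pcong_add rat_mod_pcong)

lemma rm_add_r: "p > 0 \<Longrightarrow> rat_mod (a + rat_mod b (Pw p n)) (Pw p n) = rat_mod (a + b) (Pw p n)"
  by (rule rat_mod_eq) (auto intro: pcong_add rat_mod_pcong)

lemma rm_neg: "p > 0 \<Longrightarrow> rat_mod (- rat_mod a (Pw p n)) (Pw p n) = rat_mod (- a) (Pw p n)"
  by (rule rat_mod_eq) (auto intro: pcong_neg rat_mod_pcong)

lemma rm_T: "p > 0 \<Longrightarrow> x \<in> padic p \<Longrightarrow> rat_mod (Tr p x n) (Pw p n) = Tr p x n"
  using trunc_bounds rat_mod_id by blast

lemma zero_padic[simp]: "p > 0 \<Longrightarrow> padic_zero \<in> padic p"
  unfolding padic_zero_def padic_def by auto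

lemma zero_padic_int[simp]: "p > 0 \<Longrightarrow> padic_zero \<in> padic_int p"
  unfolding padic_zero_def padic_int_def padic_def by auto

lemma lowb_zero[simp]: "lowb padic_zero L"
  unfolding lowb_def padic_zero_def by simp

lemma T_zero[simp]: "Tr p padic_zero n = 0"
  unfolding padic_trunc_def padic_zero_def by simp

lemma rm_diff_l: "p > 0 \<Longrightarrow> rat_mod (rat_mod a (Pw p n) - b) (Pw p n) = rat_mod (a - b) (Pw p n)"
  by (rule rat_mod_eq) (auto intro: pcong_diff rat_mod_pcong)

lemma rm_diff_r: "p > 0 \<Longrightarrow> rat_mod (a - rat_mod b (Pw p n)) (Pw p n) = rat_mod (a - b) (Pw p n)"
  by (rule rat_mod_eq) (auto intro: pcong_diff rat_mod_pcong)

context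
  fixes p :: nat
  assumes p1: "p > 1"
begin

lemma p0: "p > 0" using p1 by simp

lemma add_padic[simp]: "x \<in> padic p \<Longrightarrow> y \<in> padic p \<Longrightarrow> padic_add p x y \<in> padic p"
  using add_trunc[OF p1] by blast

lemma T_add: "x \<in> padic p \<Longrightarrow> y \<in> padic p \<Longrightarrow> Tr p (padic_add p x y) n = rat_mod (Tr p x n + Tr p y n) (Pw p n)"
  using add_trunc[OF p1] by blast

lemma neg_padic[simp]: "x \<in> padic p \<Longrightarrow> padic_neg p x \<in> padic p"
  using neg_trunc[OF p1] by blast

lemma T_neg: "x \<in> padic p \<Longrightarrow> Tr p (padic_neg p x) n = rat_mod (- Tr p x n) (Pw p n)"
  using neg_trunc[OF p1] by blast

lemma mul_padic[simp]: "x \<in> padic p \<Longrightarrow> y \<in> padic p \<Longrightarrow> padic_mul p x y \<in> padic p"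
  using mul_trunc[OF p1] by blast

lemmas Tsimps = T_add T_neg rm_add_l[OF p0] rm_add_r[OF p0] rm_neg[OF p0] rm_T[OF p0] rm_diff_l[OF p0] rm_diff_r[OF p0]

lemma zero_padic'[simp]: "padic_zero \<in> padic p" using p0 by simp

lemma add_comm: "x \<in> padic p \<Longrightarrow> y \<in> padic p \<Longrightarrow> padic_add p x y = padic_add p y x"
  by (rule trunc_inj[OF p0]) (auto simp: Tsimps add.commute)

lemma add_assoc: "x \<in> padic p \<Longrightarrow> y \<in> padic p \<Longrightarrow> z \<in> padic p \<Longrightarrow>
   padic_add p (padic_add p x y) z = padic_add p x (padic_add p y z)"
  by (rule trunc_inj[OF p0]) (auto simp: Tsimps add.assoc)

lemma add_zero: "x \<in> padic p \<Longrightarrow> padic_add p x padic_zero = x"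
  by (rule trunc_inj[OF p0]) (auto simp: Tsimps)

lemma add_neg: "x \<in> padic p \<Longrightarrow> padic_add p x (padic_neg p x) = padic_zero"
  by (rule trunc_inj[OF p0]) (auto simp: Tsimps)

lemma neg_neg: "x \<in> padic p \<Longrightarrow> padic_neg p (padic_neg p x) = x"
  by (rule trunc_inj[OF p0]) (auto simp: Tsimps)

lemma neg_add: "x \<in> padic p \<Longrightarrow> y \<in> padic p \<Longrightarrow>
   padic_neg p (padic_add p x y) = padic_add p (padic_neg p x) (padic_neg p y)"
  by (rule trunc_inj[OF p0]) (auto simp: Tsimps add.commute)

lemma agree_refl[simp]: "agree n x x" unfolding agree_def by simp
lemma agree_sym: "agree n x y \<Longrightarrow> agree n y x" unfolding agree_def by simp
lemma agree_trans: "agree n x y \<Longrightarrow> agree n y z \<Longrightarrow> agree n x z" unfolding agree_def by simp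
lemma agree_mono: "m \<le> n \<Longrightarrow> agree n x y \<Longrightarrow> agree m x y" unfolding agree_def by simp

lemma agree_add: "x \<in> padic p \<Longrightarrow> y \<in> padic p \<Longrightarrow> x' \<in> padic p \<Longrightarrow> y' \<in> padic p \<Longrightarrow>
  agree n x x' \<Longrightarrow> agree n y y' \<Longrightarrow> agree n (padic_add p x y) (padic_add p x' y')"
  by (simp add: agree_iff_trunc[OF p0] T_add)

lemma agree_neg: "x \<in> padic p \<Longrightarrow> x' \<in> padic p \<Longrightarrow>
  agree n x x' \<Longrightarrow> agree n (padic_neg p x) (padic_neg p x')"
  by (simp add: agree_iff_trunc[OF p0] T_neg)

lemma lowb_agree_zero: "lowb x n \<longleftrightarrow> agree n x padic_zero"
  unfolding lowb_def agree_def padic_zero_def by simp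

lemma agree_sub_iff: "x \<in> padic p \<Longrightarrow> y \<in> padic p \<Longrightarrow>
  lowb (padic_add p x (padic_neg p y)) n \<longleftrightarrow> agree n x y"
proof -
  assume x: "x \<in> padic p" and y: "y \<in> padic p"
  have "lowb (padic_add p x (padic_neg p y)) n \<longleftrightarrow> Tr p (padic_add p x (padic_neg p y)) n = 0"
    unfolding lowb_agree_zero using agree_iff_trunc[OF p0, of "padic_add p x (padic_neg p y)" padic_zero] x y by simp
  also have "\<dots> \<longleftrightarrow> rat_mod (Tr p x n - Tr p y n) (Pw p n) = rat_mod 0 (Pw p n)"
    using x y by (simp add: Tsimps)
  also have "\<dots> \<longleftrightarrow> pcong p n (Tr p x n - Tr p y n) 0"
    using rat_mod_eq_iff[OF p0, of "Tr p x n - Tr p y n" n 0] by simp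
  also have "\<dots> \<longleftrightarrow> pcong p n (Tr p x n) (Tr p y n)"
    by (simp add: pcong_0_iff[symmetric])
  also have "\<dots> \<longleftrightarrow> Tr p x n = Tr p y n"
    using pcong_bounded_eq[OF p0] trunc_bounds[OF p0 x] trunc_bounds[OF p0 y] by (metis pcong_refl)
  finally show ?thesis using agree_iff_trunc[OF p0 x y] by simp
qed

lemma padic_int_iff: "x \<in> padic_int p \<longleftrightarrow> x \<in> padic p \<and> lowb x 0"
  unfolding padic_int_def lowb_def by auto

lemma mul_cont:
  assumes c: "c \<in> padic_int p" and x: "x \<in> padic p" and y: "y \<in> padic p" and a: "agree n x y"
  shows "agree n (padic_mul p c x) (padic_mul p c y)"
proof -
  have cp: "c \<in> padic p" and c0: "lowb c 0" using c unfolding padic_int_iff by auto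
  obtain L1 where L1: "lowb x L1" using padic_lowb_ex[OF x] by blast
  obtain L2 where L2: "lowb y L2" using padic_lowb_ex[OF y] by blast
  define L where "L = min L1 L2"
  have Lx: "lowb x L" "lowb y L" using L1 L2 unfolding L_def by (auto intro: lowb_mono)
  have "Tr p (padic_mul p c x) n = rat_mod (Tr p c (n - L) * Tr p x n) (Pw p n)"
    by (rule mul_trunc_gen[OF p1 cp x c0 Lx(1)]) auto
  moreover have "Tr p (padic_mul p c y) n = rat_mod (Tr p c (n - L) * Tr p y n) (Pw p n)"
    by (rule mul_trunc_gen[OF p1 cp y c0 Lx(2)]) auto
  moreover have "Tr p x n = Tr p y n" using a agree_iff_trunc[OF p0 x y] by simp
  ultimately show ?thesis using agree_iff_trunc[OF p0] x y cp by simp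
qed

definition negone :: "int \<Rightarrow> nat" where "negone = (\<lambda>k. if k \<ge> 0 then p - 1 else 0)"

lemma negone_int: "negone \<in> padic_int p"
proof -
  have "\<forall>k<0. negone k = 0" unfolding negone_def by auto
  moreover have "\<forall>k. negone k < p" unfolding negone_def using p1 by auto
  ultimately show ?thesis unfolding padic_int_def padic_def by blast
qed

lemma negone_lowb: "lowb negone 0" unfolding negone_def lowb_def by auto

lemma T_negone: "n \<ge> 0 \<Longrightarrow> Tr p negone n = Pw p n - 1"
proof -
  have np: "negone \<in> padic p" using negone_int unfolding padic_int_def by auto
  have "n \<ge> 0 \<longrightarrow> Tr p negone n = Pw p n - 1"
  proof (induction n rule: nat_offset_induct[where L = 0])
    case (1 n) then show ?case using trunc_zero[OF np negone_lowb, of n] by (cases "n = 0") (auto simp: Pw_def)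
  next
    case (2 n)
    then have "Tr p negone (n + 1) = Pw p n - 1 + of_nat (p - 1) * Pw p n"
      using trunc_succ[OF np, of n] by (simp add: negone_def)
    also have "\<dots> = Pw p n * of_nat p - 1" using p1 by (simp add: of_nat_diff algebra_simps)
    also have "\<dots> = Pw p (n + 1) - 1" by (simp add: Pw_succ[OF p0])
    finally show ?case by simp
  qed
  then show "n \<ge> 0 \<Longrightarrow> ?thesis" by blast
qed

lemma mul_negone: "x \<in> padic p \<Longrightarrow> padic_mul p negone x = padic_neg p x"
proof (rule trunc_inj[OF p0])
  assume x: "x \<in> padic p"
  then show "padic_mul p negone x \<in> padic p" using negone_int padic_int_def by auto
  show "padic_neg p x \<in> padic p" using x by simp
  fix n
  have np: "negone \<in> padic p" using negone_int unfolding padic_int_def by auto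
  obtain L where L: "lowb x L" using padic_lowb_ex[OF x] by blast
  define a where "a = max (n - L) 0"
  have "Tr p (padic_mul p negone x) n = rat_mod (Tr p negone a * Tr p x n) (Pw p n)"
    by (rule mul_trunc_gen[OF p1 np x negone_lowb L]) (auto simp: a_def)
  also have "Tr p negone a = Pw p a - 1" using T_negone[of a] by (simp add: a_def)
  then have "Tr p negone a * Tr p x n = Pw p a * Tr p x n - Tr p x n"
    by (simp only: left_diff_distrib mult_1)
  also have "rat_mod (Pw p a * Tr p x n - Tr p x n) (Pw p n) = rat_mod (0 - Tr p x n) (Pw p n)"
  proof (rule rat_mod_eq[OF p0], rule pcong_diff[OF _ pcong_refl])
    have "pcong p (a + L) (Pw p a * Tr p x n) 0"
      by (rule pcong_mult0[OF p0 pcong_Pw[OF p0] trunc_in[OF p0 x L]]) simp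
    then show "pcong p n (Pw p a * Tr p x n) 0" by (rule pcong_mono[OF p0, rotated]) (simp add: a_def)
  qed
  finally show "Tr p (padic_mul p negone x) n = Tr p (padic_neg p x) n" using T_neg[OF x] by simp
qed

definition shift :: "int \<Rightarrow> (int \<Rightarrow> nat) \<Rightarrow> int \<Rightarrow> nat" where "shift j x = (\<lambda>k. x (k - j))"

lemma shift_padic[simp]: "x \<in> padic p \<Longrightarrow> shift j x \<in> padic p"
proof -
  assume x: "x \<in> padic p"
  then obtain N where N: "\<forall>k<N. x k = 0" unfolding padic_def by blast
  have "\<forall>k<N + j. shift j x k = 0" unfolding shift_def using N by auto
  moreover have "\<forall>k. shift j x k < p" unfolding shift_def using x padic_def by auto
  ultimately show ?thesis unfolding padic_def by blast
qed

lemma shift_lowb: "lowb (shift j x) (n + j) \<longleftrightarrow> lowb x n"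
  unfolding lowb_def shift_def
proof (intro iffI allI impI)
  fix k assume a: "\<forall>k<n + j. x (k - j) = 0" and k: "k < n"
  then show "x k = 0" using a[rule_format, of "k + j"] by simp
next
  fix k assume a: "\<forall>k<n. x k = 0" and k: "k < n + j"
  then show "x (k - j) = 0" using a[rule_format, of "k - j"] by simp
qed

lemma shift_shift[simp]: "shift a (shift b x) = shift (a + b) x"
  unfolding shift_def by (simp add: algebra_simps)

lemma shift_0[simp]: "shift 0 x = x"
  unfolding shift_def by simp

lemma shift_agree: "agree (n + j) (shift j x) (shift j y) \<longleftrightarrow> agree n x y"
  unfolding agree_def shift_def
proof (intro iffI allI impI)
  fix k assume a: "\<forall>k<n + j. x (k - j) = y (k - j)" and k: "k < n"
  then show "x k = y k" using a[rule_format, of "k + j"] by simp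
next
  fix k assume a: "\<forall>k<n. x k = y k" and k: "k < n + j"
  then show "x (k - j) = y (k - j)" using a[rule_format, of "k - j"] by simp
qed

lemma T_shift: "x \<in> padic p \<Longrightarrow> Tr p (shift j x) n = Pw p j * Tr p x (n - j)"
proof -
  assume x: "x \<in> padic p"
  obtain L where L: "lowb x L" using padic_lowb_ex[OF x] by blast
  have sL: "lowb (shift j x) (L + j)" using L shift_lowb by blast
  show ?thesis
  proof (induction n rule: nat_offset_induct[where L = "L + j"])
    case (1 n) then show ?case using trunc_zero[OF shift_padic[OF x] sL, of n] trunc_zero[OF x L, of "n - j"] by simp
  next
    case (2 n)
    have e: "n + 1 - j = (n - j) + 1" by simp
    have a: "Tr p (shift j x) (n+1) = Tr p (shift j x) n + of_nat (x (n - j)) * Pw p n"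
      using trunc_succ[OF shift_padic[OF x, of j], of n] by (simp add: shift_def)
    have b: "Tr p x (n + 1 - j) = Tr p x (n - j) + of_nat (x (n-j)) * Pw p (n - j)"
      unfolding e by (rule trunc_succ[OF x])
    have c: "Pw p n = Pw p j * Pw p (n - j)" using Pw_add[OF p0, of j "n-j"] by simp
    show ?case using 2 a b c by (simp add: algebra_simps)
  qed
qed

definition pk :: "int \<Rightarrow> int \<Rightarrow> nat" where "pk k = (\<lambda>j. if j = k then 1 else 0)"

lemma pk_int: "k \<ge> 0 \<Longrightarrow> pk k \<in> padic_int p"
  unfolding pk_def padic_int_def padic_def using p1 by auto

lemma pk_lowb: "k \<ge> 0 \<Longrightarrow> lowb (pk k) 0" unfolding pk_def lowb_def by auto

lemma T_pk: "a > k \<Longrightarrow> Tr p (pk k) a = Pw p k"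
proof -
  assume a: "a > k"
  have pp: "pk k \<in> padic p" unfolding pk_def padic_def using p1 by auto
  have l: "lowb (pk k) k" unfolding pk_def lowb_def by auto
  have "Tr p (pk k) a = (\<Sum>j\<in>{k..<a}. of_nat (pk k j) * Pw p j)" by (rule trunc_eq[OF pp l])
  also have "\<dots> = (\<Sum>j\<in>{k}. of_nat (pk k j) * Pw p j)"
    by (rule sum.mono_neutral_right) (use a in \<open>auto simp: pk_def\<close>)
  finally show ?thesis by (simp add: pk_def)
qed

lemma mul_pk: "k \<ge> 0 \<Longrightarrow> x \<in> padic p \<Longrightarrow> padic_mul p (pk k) x = shift k x"
proof (rule trunc_inj[OF p0])
  assume k: "k \<ge> 0" and x: "x \<in> padic p"
  have pp: "pk k \<in> padic p" using pk_int[OF k] unfolding padic_int_def by auto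
  then show "padic_mul p (pk k) x \<in> padic p" using x by simp
  show "shift k x \<in> padic p" using x by simp
  fix n
  obtain L where L: "lowb x L" using padic_lowb_ex[OF x] by blast
  define a where "a = max (n - L) (k + 1)"
  have "Tr p (padic_mul p (pk k) x) n = rat_mod (Tr p (pk k) a * Tr p x n) (Pw p n)"
    by (rule mul_trunc_gen[OF p1 pp x pk_lowb[OF k] L]) (auto simp: a_def)
  also have "\<dots> = rat_mod (Pw p k * Tr p x n) (Pw p n)" using T_pk[of k a] by (simp add: a_def)
  also have "\<dots> = rat_mod (Pw p k * Tr p x (n - k)) (Pw p n)"
  proof (rule rat_mod_eq[OF p0])
    have "pcong p (k + (n - k)) (Pw p k * Tr p x n) (Pw p k * Tr p x (n - k))"
      by (rule pcong_mult'[OF p0 pcong_Pw[OF p0] trunc_cong[OF p0 x]]) (use k in auto)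
    then show "pcong p n (Pw p k * Tr p x n) (Pw p k * Tr p x (n - k))" by simp
  qed
  also have "\<dots> = Tr p (shift k x) n" using T_shift[OF x] rm_T[OF p0 shift_padic[OF x]] by metis
  finally show "Tr p (padic_mul p (pk k) x) n = Tr p (shift k x) n" .
qed

lemma ord_ex:
  assumes x: "x \<in> padic p" and nz: "x \<noteq> padic_zero"
  shows "x (padic_ord x) \<noteq> 0 \<and> lowb x (padic_ord x)"
proof -
  obtain L where L: "lowb x L" using padic_lowb_ex[OF x] by blast
  obtain k where k: "x k \<noteq> 0" using nz unfolding padic_zero_def by auto
  have kL: "k \<ge> L" using k L unfolding lowb_def by (cases "k < L") auto
  define m where "m = (LEAST i::nat. x (L + int i) \<noteq> 0)"
  have ex: "x (L + int (nat (k - L))) \<noteq> 0" using k kL by simp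
  have m1: "x (L + int m) \<noteq> 0" unfolding m_def by (rule LeastI[where P = "\<lambda>i. x (L + int i) \<noteq> 0", OF ex])
  have m2: "\<forall>j<L + int m. x j = 0"
  proof (intro allI impI)
    fix j assume j: "j < L + int m"
    show "x j = 0"
    proof (cases "j < L")
      case True then show ?thesis using L unfolding lowb_def by blast
    next
      case False
      then have "nat (j - L) < m" using j by auto
      then have "x (L + int (nat (j - L))) = 0" unfolding m_def using not_less_Least[where P = "\<lambda>i. x (L + int i) \<noteq> 0"] by blast
      then show ?thesis using False by simp
    qed
  qed
  have uniq: "\<exists>!q. x q \<noteq> 0 \<and> (\<forall>j<q. x j = 0)"
  proof (rule ex1I[of _ "L + int m"])
    show "x (L + int m) \<noteq> 0 \<and> (\<forall>j<L + int m. x j = 0)" using m1 m2 by blast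
    fix q assume q: "x q \<noteq> 0 \<and> (\<forall>j<q. x j = 0)"
    then show "q = L + int m" using m1 m2 by (metis linorder_neqE_linordered_idom)
  qed
  have "x (padic_ord x) \<noteq> 0 \<and> (\<forall>j<padic_ord x. x j = 0)"
    unfolding padic_ord_def by (rule theI'[OF uniq])
  then show ?thesis unfolding lowb_def by blast
qed

lemma norm_le_iff:
  assumes x: "x \<in> padic p"
  shows "padic_norm p x \<le> real p powi (- n) \<longleftrightarrow> lowb x n"
proof (cases "x = padic_zero")
  case True then show ?thesis unfolding padic_norm_def by simp
next
  case False
  note o = ord_ex[OF x False]
  have "lowb x n \<longleftrightarrow> n \<le> padic_ord x"
    using o lowb_mono unfolding lowb_def by (metis not_le)
  moreover have "real p powi (- padic_ord x) \<le> real p powi (- n) \<longleftrightarrow> n \<le> padic_ord x"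
  proof
    assume "real p powi (- padic_ord x) \<le> real p powi (- n)"
    then show "n \<le> padic_ord x"
      using power_int_strict_increasing[of "- n" "- padic_ord x" "real p"] p1 by force
  next
    assume "n \<le> padic_ord x"
    then show "real p powi (- padic_ord x) \<le> real p powi (- n)"
      using power_int_increasing[of "- padic_ord x" "- n" "real p"] p1 by force
  qed
  ultimately show ?thesis unfolding padic_norm_def using False by simp
qed

lemma norm_less_imp:
  assumes x: "x \<in> padic p" and l: "padic_norm p x < real p powi (- n + 1)"
  shows "lowb x n"
proof (cases "x = padic_zero")
  case True then show ?thesis by simp
next
  case False
  note o = ord_ex[OF x False]
  have "real p powi (- padic_ord x) < real p powi (- n + 1)" using l False unfolding padic_norm_def by simp
  then have "- padic_ord x < - n + 1"
    using power_int_increasing[of "- n + 1" "- padic_ord x" "real p"] p1 by force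
  then have "n \<le> padic_ord x" by simp
  then show ?thesis using o lowb_mono by blast
qed

lemma norm_gt1_iff: "x \<in> padic p \<Longrightarrow> padic_norm p x > 1 \<longleftrightarrow> \<not> lowb x 0"
  using norm_le_iff[of x 0] by auto

lemma norm_nonneg: "padic_norm p x \<ge> 0"
  unfolding padic_norm_def by simp

end


definition vagree :: "'x set \<Rightarrow> int \<Rightarrow> 'x vec \<Rightarrow> 'x vec \<Rightarrow> bool" where
  "vagree X n \<xi> \<eta> \<longleftrightarrow> (\<forall>i\<in>X. agree n (\<xi> i) (\<eta> i))"

definition vlowb :: "'x set \<Rightarrow> 'x vec \<Rightarrow> int \<Rightarrow> bool" where
  "vlowb X \<xi> n \<longleftrightarrow> (\<forall>i\<in>X. lowb (\<xi> i) n)"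

definition vshift :: "'x set \<Rightarrow> int \<Rightarrow> 'x vec \<Rightarrow> 'x vec" where
  "vshift X j \<xi> = (\<lambda>i\<in>X. shift j (\<xi> i))"

context
  fixes p :: nat and X :: "'x set"
  assumes p1: "p > 1"
begin

lemma p0': "p > 0" using p1 by simp

lemma zp[simp]: "padic_zero \<in> padic p" using p0' by simp

lemma QpX_iff: "\<xi> \<in> QpX p X \<longleftrightarrow> \<xi> \<in> PiE X (\<lambda>_. padic p) \<and> finite {i\<in>X. \<not> lowb (\<xi> i) 0}"
proof -
  have "\<xi> \<in> PiE X (\<lambda>_. padic p) \<Longrightarrow> {i \<in> X. padic_norm p (\<xi> i) > 1} = {i\<in>X. \<not> lowb (\<xi> i) 0}"
    using norm_gt1_iff[OF p1] by (auto simp: PiE_iff)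
  then show ?thesis unfolding QpX_def by auto
qed

lemma QpX_padic: "\<xi> \<in> QpX p X \<Longrightarrow> i \<in> X \<Longrightarrow> \<xi> i \<in> padic p"
  unfolding QpX_def by (auto simp: PiE_iff)

lemma QpX_ext: "\<xi> \<in> QpX p X \<Longrightarrow> \<xi> \<in> extensional X"
  unfolding QpX_def by (auto simp: PiE_iff)

lemma QpX_eqI:
  assumes "\<xi> \<in> QpX p X" "\<eta> \<in> QpX p X" "\<And>n. vagree X n \<xi> \<eta>"
  shows "\<xi> = \<eta>"
proof (rule extensionalityI[OF QpX_ext[OF assms(1)] QpX_ext[OF assms(2)]])
  fix i assume i: "i \<in> X"
  show "\<xi> i = \<eta> i"
  proof
    fix k show "\<xi> i k = \<eta> i k" using assms(3)[of "k+1"] i unfolding vagree_def agree_def by auto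
  qed
qed

lemma QpX_lowb_ex: "\<xi> \<in> QpX p X \<Longrightarrow> \<exists>n\<le>0. vlowb X \<xi> n"
proof -
  assume x: "\<xi> \<in> QpX p X"
  define B where "B = {i\<in>X. \<not> lowb (\<xi> i) 0}"
  have fB: "finite B" using x unfolding QpX_iff B_def by blast
  have "\<forall>i\<in>B. \<exists>L. lowb (\<xi> i) L" using x QpX_padic padic_lowb_ex unfolding B_def by blast
  then obtain L where L: "\<forall>i\<in>B. lowb (\<xi> i) (L i)" by metis
  define n where "n = min 0 (if B = {} then 0 else Min (L ` B))"
  have "vlowb X \<xi> n" unfolding vlowb_def
  proof
    fix i assume i: "i \<in> X"
    show "lowb (\<xi> i) n"
    proof (cases "i \<in> B")
      case True
      have "Min (L ` B) \<le> L i" using fB True by (intro Min_le) auto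
      then have "n \<le> L i" unfolding n_def using True by auto
      then show ?thesis using L True lowb_mono by blast
    next
      case False
      then have "lowb (\<xi> i) 0" using i unfolding B_def by blast
      then show ?thesis unfolding n_def by (rule lowb_mono) simp
    qed
  qed
  then show ?thesis unfolding n_def by (intro exI[of _ n]) (simp add: n_def)
qed

lemma vzero_QpX[simp]: "vzero X \<in> QpX p X"
  unfolding QpX_iff vzero_def using p0' by auto

lemma vadd_QpX[simp]: "\<xi> \<in> QpX p X \<Longrightarrow> \<eta> \<in> QpX p X \<Longrightarrow> vadd p X \<xi> \<eta> \<in> QpX p X"
proof -
  assume a: "\<xi> \<in> QpX p X" "\<eta> \<in> QpX p X"
  have pad: "vadd p X \<xi> \<eta> \<in> PiE X (\<lambda>_. padic p)"
    using a QpX_padic[OF a(1)] QpX_padic[OF a(2)] add_padic[OF p1] unfolding vadd_def by auto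
  have "{i\<in>X. \<not> lowb (vadd p X \<xi> \<eta> i) 0} \<subseteq> {i\<in>X. \<not> lowb (\<xi> i) 0} \<union> {i\<in>X. \<not> lowb (\<eta> i) 0}"
  proof
    fix i assume "i \<in> {i\<in>X. \<not> lowb (vadd p X \<xi> \<eta> i) 0}"
    then have i: "i \<in> X" and n1: "\<not> lowb (vadd p X \<xi> \<eta> i) 0" by auto
    show "i \<in> {i\<in>X. \<not> lowb (\<xi> i) 0} \<union> {i\<in>X. \<not> lowb (\<eta> i) 0}"
    proof (rule ccontr)
      assume "i \<notin> {i\<in>X. \<not> lowb (\<xi> i) 0} \<union> {i\<in>X. \<not> lowb (\<eta> i) 0}"
      then have l: "lowb (\<xi> i) 0" "lowb (\<eta> i) 0" using i by auto
      have "agree 0 (padic_add p (\<xi> i) (\<eta> i)) (padic_add p padic_zero padic_zero)"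
        using l QpX_padic[OF a(1) i] QpX_padic[OF a(2) i] lowb_agree_zero[OF p1]
        by (intro agree_add[OF p1]) auto
      then show False using n1 i add_zero[OF p1, of padic_zero] lowb_agree_zero[OF p1]
        unfolding vadd_def by simp
    qed
  qed
  then show ?thesis using pad a unfolding QpX_iff by (meson finite_UnI finite_subset)
qed

lemma vneg_QpX[simp]: "\<xi> \<in> QpX p X \<Longrightarrow> vneg p X \<xi> \<in> QpX p X"
proof -
  assume a: "\<xi> \<in> QpX p X"
  have pad: "vneg p X \<xi> \<in> PiE X (\<lambda>_. padic p)"
    using a QpX_padic[OF a(1)] neg_padic[OF p1] unfolding vneg_def by auto
  have "{i\<in>X. \<not> lowb (vneg p X \<xi> i) 0} \<subseteq> {i\<in>X. \<not> lowb (\<xi> i) 0}"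
  proof clarify
    fix i assume i: "i \<in> X" and n: "\<not> lowb (vneg p X \<xi> i) 0" "lowb (\<xi> i) 0"
    have "agree 0 (padic_neg p (\<xi> i)) (padic_neg p padic_zero)"
      using n(2) QpX_padic[OF a(1) i] lowb_agree_zero[OF p1]
      by (intro agree_neg[OF p1]) auto
    moreover have "padic_neg p padic_zero = padic_zero"
      by (rule trunc_inj[OF p0']) (auto simp: T_neg[OF p1] neg_padic[OF p1])
    ultimately show False using n(1) i lowb_agree_zero[OF p1] unfolding vneg_def by simp
  qed
  then show ?thesis using pad a unfolding QpX_iff by (meson finite_subset)
qed

lemma mul_zero: "c \<in> padic p \<Longrightarrow> padic_mul p c padic_zero = padic_zero"
proof (rule trunc_inj[OF p0'])
  assume c: "c \<in> padic p"
  then show "padic_mul p c padic_zero \<in> padic p" by (simp add: mul_padic[OF p1])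
  show "padic_zero \<in> padic p" using p0' by simp
  fix n
  obtain L where L: "lowb c L" using padic_lowb_ex[OF c] by blast
  have "Tr p (padic_mul p c padic_zero) n = rat_mod (Tr p c n * Tr p padic_zero (n - L)) (Pw p n)"
    by (rule mul_trunc_gen[OF p1 c _ L lowb_zero]) (use p0' in auto)
  then show "Tr p (padic_mul p c padic_zero) n = Tr p padic_zero n" by simp
qed

lemma vsmul_QpX[simp]: "c \<in> padic_int p \<Longrightarrow> \<xi> \<in> QpX p X \<Longrightarrow> vsmul p X c \<xi> \<in> QpX p X"
proof -
  assume c: "c \<in> padic_int p" and a: "\<xi> \<in> QpX p X"
  have cp: "c \<in> padic p" using c unfolding padic_int_def by auto
  have pad: "vsmul p X c \<xi> \<in> PiE X (\<lambda>_. padic p)"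
    using a QpX_padic[OF a(1)] mul_padic[OF p1] cp unfolding vsmul_def by auto
  have "{i\<in>X. \<not> lowb (vsmul p X c \<xi> i) 0} \<subseteq> {i\<in>X. \<not> lowb (\<xi> i) 0}"
  proof clarify
    fix i assume i: "i \<in> X" and n: "\<not> lowb (vsmul p X c \<xi> i) 0" "lowb (\<xi> i) 0"
    have "agree 0 (padic_mul p c (\<xi> i)) (padic_mul p c padic_zero)"
      using n(2) QpX_padic[OF a(1) i] lowb_agree_zero[OF p1] c p0'
      by (intro mul_cont[OF p1]) auto
    then show False using n(1) i lowb_agree_zero[OF p1] mul_zero[OF cp] unfolding vsmul_def by simp
  qed
  then show ?thesis using pad a unfolding QpX_iff by (meson finite_subset)
qed

lemma vshift_QpX: "\<xi> \<in> QpX p X \<Longrightarrow> j \<ge> 0 \<or> vlowb X \<xi> (- j) \<Longrightarrow> vshift X j \<xi> \<in> QpX p X"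
proof -
  assume a: "\<xi> \<in> QpX p X" and j: "j \<ge> 0 \<or> vlowb X \<xi> (- j)"
  have pad: "vshift X j \<xi> \<in> PiE X (\<lambda>_. padic p)"
    using a QpX_padic[OF a(1)] shift_padic[OF p1] unfolding vshift_def by auto
  have "{i\<in>X. \<not> lowb (vshift X j \<xi> i) 0} \<subseteq> {i\<in>X. \<not> lowb (\<xi> i) 0}"
  proof clarify
    fix i assume i: "i \<in> X" and n: "\<not> lowb (vshift X j \<xi> i) 0" "lowb (\<xi> i) 0"
    have "lowb (\<xi> i) (- j)" using j n(2) i lowb_mono unfolding vlowb_def by auto
    then have "lowb (shift j (\<xi> i)) (- j + j)" using shift_lowb[OF p1] by blast
    then show False using n(1) i unfolding vshift_def by simp
  qed
  then show ?thesis using pad a unfolding QpX_iff by (meson finite_subset)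
qed

lemma restrict_eq_QpX: "\<xi> \<in> QpX p X \<Longrightarrow> (\<And>i. i \<in> X \<Longrightarrow> f i = \<xi> i) \<Longrightarrow> (\<lambda>i\<in>X. f i) = \<xi>"
  by (rule extensionalityI[OF restrict_extensional QpX_ext]) auto

lemma vadd_comm: "\<xi> \<in> QpX p X \<Longrightarrow> \<eta> \<in> QpX p X \<Longrightarrow> vadd p X \<xi> \<eta> = vadd p X \<eta> \<xi>"
  unfolding vadd_def using add_comm[OF p1] QpX_padic by (intro restrict_ext) blast

lemma vadd_assoc: "\<xi> \<in> QpX p X \<Longrightarrow> \<eta> \<in> QpX p X \<Longrightarrow> \<zeta> \<in> QpX p X \<Longrightarrow>
   vadd p X (vadd p X \<xi> \<eta>) \<zeta> = vadd p X \<xi> (vadd p X \<eta> \<zeta>)"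
  unfolding vadd_def using add_assoc[OF p1] QpX_padic by (intro restrict_ext) auto

lemma vadd_zero: "\<xi> \<in> QpX p X \<Longrightarrow> vadd p X \<xi> (vzero X) = \<xi>"
  unfolding vadd_def vzero_def by (rule restrict_eq_QpX) (auto simp: add_zero[OF p1] QpX_padic)

lemma vzero_add: "\<xi> \<in> QpX p X \<Longrightarrow> vadd p X (vzero X) \<xi> = \<xi>"
  using vadd_comm[OF vzero_QpX, of \<xi>] vadd_zero[of \<xi>] by simp

lemma vadd_neg: "\<xi> \<in> QpX p X \<Longrightarrow> vadd p X \<xi> (vneg p X \<xi>) = vzero X"
  unfolding vadd_def vzero_def vneg_def using add_neg[OF p1] QpX_padic
  by (intro restrict_ext) auto

lemma vneg_add_self: "\<xi> \<in> QpX p X \<Longrightarrow> vadd p X (vneg p X \<xi>) \<xi> = vzero X"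
proof -
  assume a: "\<xi> \<in> QpX p X"
  show ?thesis using vadd_comm[OF vneg_QpX[OF a] a] vadd_neg[OF a] by simp
qed

lemma vneg_vneg: "\<xi> \<in> QpX p X \<Longrightarrow> vneg p X (vneg p X \<xi>) = \<xi>"
  unfolding vneg_def by (rule restrict_eq_QpX) (auto simp: neg_neg[OF p1] QpX_padic)

lemma vneg_vadd: "\<xi> \<in> QpX p X \<Longrightarrow> \<eta> \<in> QpX p X \<Longrightarrow>
   vneg p X (vadd p X \<xi> \<eta>) = vadd p X (vneg p X \<xi>) (vneg p X \<eta>)"
  unfolding vadd_def vneg_def using neg_add[OF p1] QpX_padic by (intro restrict_ext) auto

lemma vadd_left_comm: "\<xi> \<in> QpX p X \<Longrightarrow> \<eta> \<in> QpX p X \<Longrightarrow> \<zeta> \<in> QpX p X \<Longrightarrow>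
   vadd p X \<xi> (vadd p X \<eta> \<zeta>) = vadd p X \<eta> (vadd p X \<xi> \<zeta>)"
  by (simp add: vadd_assoc[symmetric] vadd_comm[of \<xi> \<eta>])

lemma vadd_neg_cancel: "\<xi> \<in> QpX p X \<Longrightarrow> \<eta> \<in> QpX p X \<Longrightarrow> vadd p X \<xi> (vadd p X (vneg p X \<xi>) \<eta>) = \<eta>"
  by (simp add: vadd_assoc[symmetric] vadd_neg vzero_add)

lemma vneg_cancel: "\<xi> \<in> QpX p X \<Longrightarrow> \<eta> \<in> QpX p X \<Longrightarrow> vadd p X (vneg p X \<xi>) (vadd p X \<xi> \<eta>) = \<eta>"
  using vadd_neg_cancel[of "vneg p X \<xi>" \<eta>] vneg_vneg[of \<xi>] by simp

lemma vneg_zero: "vneg p X (vzero X) = vzero X"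
  using vadd_neg[OF vzero_QpX] vzero_add[OF vneg_QpX[OF vzero_QpX]] by simp

lemma vagree_refl[simp]: "vagree X n \<xi> \<xi>" unfolding vagree_def agree_def by simp
lemma vagree_sym: "vagree X n \<xi> \<eta> \<Longrightarrow> vagree X n \<eta> \<xi>" unfolding vagree_def using agree_sym[OF p1] by blast
lemma vagree_trans: "vagree X n \<xi> \<eta> \<Longrightarrow> vagree X n \<eta> \<zeta> \<Longrightarrow> vagree X n \<xi> \<zeta>"
  unfolding vagree_def using agree_trans[OF p1] by blast
lemma vagree_mono: "m \<le> n \<Longrightarrow> vagree X n \<xi> \<eta> \<Longrightarrow> vagree X m \<xi> \<eta>"
  unfolding vagree_def using agree_mono[OF p1] by blast

lemma vagree_add: "\<xi> \<in> QpX p X \<Longrightarrow> \<eta> \<in> QpX p X \<Longrightarrow> \<xi>' \<in> QpX p X \<Longrightarrow> \<eta>' \<in> QpX p X \<Longrightarrow>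
  vagree X n \<xi> \<xi>' \<Longrightarrow> vagree X n \<eta> \<eta>' \<Longrightarrow> vagree X n (vadd p X \<xi> \<eta>) (vadd p X \<xi>' \<eta>')"
  unfolding vagree_def vadd_def using agree_add[OF p1] QpX_padic by simp

lemma vagree_neg: "\<xi> \<in> QpX p X \<Longrightarrow> \<xi>' \<in> QpX p X \<Longrightarrow>
  vagree X n \<xi> \<xi>' \<Longrightarrow> vagree X n (vneg p X \<xi>) (vneg p X \<xi>')"
  unfolding vagree_def vneg_def using agree_neg[OF p1] QpX_padic by simp

lemma vagree_smul: "c \<in> padic_int p \<Longrightarrow> \<xi> \<in> QpX p X \<Longrightarrow> \<xi>' \<in> QpX p X \<Longrightarrow>
  vagree X n \<xi> \<xi>' \<Longrightarrow> vagree X n (vsmul p X c \<xi>) (vsmul p X c \<xi>')"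
  unfolding vagree_def vsmul_def using mul_cont[OF p1] QpX_padic by simp

lemma vlowb_agree: "vlowb X \<xi> n \<longleftrightarrow> vagree X n \<xi> (vzero X)"
  unfolding vlowb_def vagree_def vzero_def using lowb_agree_zero[OF p1] by simp

lemma vsub_iff: "\<xi> \<in> QpX p X \<Longrightarrow> \<eta> \<in> QpX p X \<Longrightarrow>
  vlowb X (vadd p X \<xi> (vneg p X \<eta>)) n \<longleftrightarrow> vagree X n \<xi> \<eta>"
  unfolding vlowb_def vagree_def vadd_def vneg_def using agree_sub_iff[OF p1] QpX_padic by simp

lemma vlowb_mono: "m \<le> n \<Longrightarrow> vlowb X \<xi> n \<Longrightarrow> vlowb X \<xi> m"
  unfolding vlowb_def using lowb_mono by blast

lemma vlowb_add: "\<xi> \<in> QpX p X \<Longrightarrow> \<eta> \<in> QpX p X \<Longrightarrow> vlowb X \<xi> n \<Longrightarrow> vlowb X \<eta> n \<Longrightarrow> vlowb X (vadd p X \<xi> \<eta>) n"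
  using vagree_add[of \<xi> \<eta> "vzero X" "vzero X" n] vadd_zero[of "vzero X"] unfolding vlowb_agree by simp

lemma vlowb_neg: "\<xi> \<in> QpX p X \<Longrightarrow> vlowb X \<xi> n \<Longrightarrow> vlowb X (vneg p X \<xi>) n"
  using vagree_neg[of \<xi> "vzero X" n] vneg_zero unfolding vlowb_agree by simp

lemma vagree_all_eq: "\<xi> \<in> QpX p X \<Longrightarrow> \<eta> \<in> QpX p X \<Longrightarrow> (\<And>n. vagree X n \<xi> \<eta>) \<Longrightarrow> \<xi> = \<eta>"
  by (rule QpX_eqI)

lemma vsmul_negone: "\<xi> \<in> QpX p X \<Longrightarrow> vsmul p X (negone p) \<xi> = vneg p X \<xi>"
  unfolding vsmul_def vneg_def using mul_negone[OF p1] QpX_padic by (intro restrict_ext) auto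

lemma vsmul_pk: "k \<ge> 0 \<Longrightarrow> \<xi> \<in> QpX p X \<Longrightarrow> vsmul p X (pk k) \<xi> = vshift X k \<xi>"
  unfolding vsmul_def vshift_def using mul_pk[OF p1] QpX_padic by (intro restrict_ext) auto

lemma vshift_vshift: "vshift X a (vshift X b \<xi>) = vshift X (a + b) \<xi>"
  unfolding vshift_def by (intro restrict_ext) (auto simp: shift_shift[OF p1])

lemma vshift_0: "\<xi> \<in> QpX p X \<Longrightarrow> vshift X 0 \<xi> = \<xi>"
  unfolding vshift_def by (rule restrict_eq_QpX) (auto simp: shift_0[OF p1])

lemma vshift_lowb: "vlowb X (vshift X j \<xi>) (n + j) \<longleftrightarrow> vlowb X \<xi> n"
  unfolding vlowb_def vshift_def using shift_lowb[OF p1] by simp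

lemma vnorm_bdd: "\<xi> \<in> QpX p X \<Longrightarrow> bdd_above (insert 0 ((\<lambda>i. padic_norm p (\<xi> i)) ` X))"
proof -
  assume a: "\<xi> \<in> QpX p X"
  define B where "B = {i\<in>X. \<not> lowb (\<xi> i) 0}"
  have fB: "finite B" using a unfolding QpX_iff B_def by blast
  define M where "M = max 1 (Max (insert 0 ((\<lambda>i. padic_norm p (\<xi> i)) ` B)))"
  have "\<forall>y\<in>insert 0 ((\<lambda>i. padic_norm p (\<xi> i)) ` X). y \<le> M"
  proof
    fix y assume "y \<in> insert 0 ((\<lambda>i. padic_norm p (\<xi> i)) ` X)"
    then consider "y = 0" | i where "i \<in> X" "y = padic_norm p (\<xi> i)" by blast
    then show "y \<le> M"
    proof cases
      case 1 then show ?thesis unfolding M_def by simp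
    next
      case 2
      show ?thesis
      proof (cases "i \<in> B")
        case True
        then have "y \<le> Max (insert 0 ((\<lambda>i. padic_norm p (\<xi> i)) ` B))" using fB 2 by (intro Max_ge) auto
        then show ?thesis unfolding M_def by simp
      next
        case False
        then have "lowb (\<xi> i) 0" using 2 unfolding B_def by blast
        then have "y \<le> 1" using norm_le_iff[OF p1 QpX_padic[OF a 2(1)], of 0] 2 by simp
        then show ?thesis unfolding M_def by simp
      qed
    qed
  qed
  then show ?thesis by (intro bdd_aboveI[where M = M]) blast
qed

lemma vnorm_ge: assumes "\<xi> \<in> QpX p X" "i \<in> X" shows "padic_norm p (\<xi> i) \<le> vnorm p X \<xi>"
  unfolding vnorm_def by (rule cSup_upper) (use assms vnorm_bdd[OF assms(1)] in auto)

lemma vnorm_nonneg: assumes "\<xi> \<in> QpX p X" shows "0 \<le> vnorm p X \<xi>"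
  unfolding vnorm_def by (rule cSup_upper) (use assms vnorm_bdd[OF assms(1)] in auto)

lemma vnorm_le_iff: "\<xi> \<in> QpX p X \<Longrightarrow> vnorm p X \<xi> \<le> real p powi (- n) \<longleftrightarrow> vlowb X \<xi> n"
proof
  assume a: "\<xi> \<in> QpX p X" "vnorm p X \<xi> \<le> real p powi (- n)"
  show "vlowb X \<xi> n" unfolding vlowb_def
  proof
    fix i assume i: "i \<in> X"
    then have "padic_norm p (\<xi> i) \<le> real p powi (- n)" using vnorm_ge[OF a(1) i] a(2) by linarith
    then show "lowb (\<xi> i) n" using norm_le_iff[OF p1 QpX_padic[OF a(1) i]] by blast
  qed
next
  assume a: "\<xi> \<in> QpX p X" "vlowb X \<xi> n"
  show "vnorm p X \<xi> \<le> real p powi (- n)" unfolding vnorm_def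
  proof (rule cSup_least)
    fix y assume "y \<in> insert 0 ((\<lambda>i. padic_norm p (\<xi> i)) ` X)"
    then show "y \<le> real p powi (- n)"
      using a norm_le_iff[OF p1 QpX_padic[OF a(1)]] unfolding vlowb_def by auto
  qed simp
qed

lemma vnorm_less_imp: "\<xi> \<in> QpX p X \<Longrightarrow> vnorm p X \<xi> < real p powi (- n + 1) \<Longrightarrow> vlowb X \<xi> n"
  unfolding vlowb_def using vnorm_ge norm_less_imp[OF p1] QpX_padic by (meson le_less_trans)

end


definition bnd :: "nat \<Rightarrow> 'x set \<Rightarrow> 'x oper \<Rightarrow> int \<Rightarrow> bool" where
  "bnd p X T m \<longleftrightarrow> (\<forall>\<xi>\<in>QpX p X. \<forall>n. vlowb X \<xi> n \<longrightarrow> vlowb X (T \<xi>) (n - m))"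

context
  fixes p :: nat and X :: "'x set"
  assumes p1: "p > 1"
begin

lemma op_comp_apply[simp]: "\<xi> \<in> QpX p X \<Longrightarrow> op_comp p X S T \<xi> = S (T \<xi>)"
  unfolding op_comp_def by simp
lemma op_add_apply[simp]: "\<xi> \<in> QpX p X \<Longrightarrow> op_add p X S T \<xi> = vadd p X (S \<xi>) (T \<xi>)"
  unfolding op_add_def by simp
lemma op_neg_apply[simp]: "\<xi> \<in> QpX p X \<Longrightarrow> op_neg p X T \<xi> = vneg p X (T \<xi>)"
  unfolding op_neg_def by simp
lemma op_smul_apply[simp]: "\<xi> \<in> QpX p X \<Longrightarrow> op_smul p X c T \<xi> = vsmul p X c (T \<xi>)"
  unfolding op_smul_def by simp
lemma op_id_apply[simp]: "\<xi> \<in> QpX p X \<Longrightarrow> op_id p X \<xi> = \<xi>"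
  unfolding op_id_def by simp
lemma op_zero_apply[simp]: "\<xi> \<in> QpX p X \<Longrightarrow> op_zero p X \<xi> = vzero X"
  unfolding op_zero_def by simp
lemma op_diff_apply[simp]: "\<xi> \<in> QpX p X \<Longrightarrow> op_diff p X S T \<xi> = vadd p X (S \<xi>) (vneg p X (T \<xi>))"
  unfolding op_diff_def by simp

lemma Bops_QpX[simp]: "T \<in> Bops p X \<Longrightarrow> \<xi> \<in> QpX p X \<Longrightarrow> T \<xi> \<in> QpX p X"
  unfolding Bops_def by auto
lemma Bops_ext: "T \<in> Bops p X \<Longrightarrow> T \<in> extensional (QpX p X)"
  unfolding Bops_def by auto
lemma Bops_add: "T \<in> Bops p X \<Longrightarrow> \<xi> \<in> QpX p X \<Longrightarrow> \<eta> \<in> QpX p X \<Longrightarrow> T (vadd p X \<xi> \<eta>) = vadd p X (T \<xi>) (T \<eta>)"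
  unfolding Bops_def by auto
lemma Bops_smul: "T \<in> Bops p X \<Longrightarrow> c \<in> padic_int p \<Longrightarrow> \<xi> \<in> QpX p X \<Longrightarrow> T (vsmul p X c \<xi>) = vsmul p X c (T \<xi>)"
  unfolding Bops_def by auto
lemma Bops_tau: "T \<in> Bops p X \<Longrightarrow> tau_continuous p X T"
  unfolding Bops_def by auto

lemma Bops_neg:
  assumes T: "T \<in> Bops p X" and x: "\<xi> \<in> QpX p X"
  shows "T (vneg p X \<xi>) = vneg p X (T \<xi>)"
proof -
  have "T (vneg p X \<xi>) = T (vsmul p X (negone p) \<xi>)" using vsmul_negone[OF p1 x] by simp
  also have "\<dots> = vsmul p X (negone p) (T \<xi>)" using Bops_smul[OF T negone_int[OF p1] x] .
  also have "\<dots> = vneg p X (T \<xi>)" using vsmul_negone[OF p1 Bops_QpX[OF T x]] .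
  finally show ?thesis .
qed

lemma Bops_zero:
  assumes T: "T \<in> Bops p X"
  shows "T (vzero X) = vzero X"
proof -
  have z: "vzero X \<in> QpX p X" using vzero_QpX[OF p1] .
  have "T (vzero X) = T (vadd p X (vzero X) (vneg p X (vzero X)))" using vadd_neg[OF p1 z] by simp
  also have "\<dots> = vadd p X (T (vzero X)) (T (vneg p X (vzero X)))"
    using Bops_add[OF T z vneg_QpX[OF p1 z]] .
  also have "\<dots> = vadd p X (T (vzero X)) (vneg p X (T (vzero X)))" using Bops_neg[OF T z] by simp
  also have "\<dots> = vzero X" using vadd_neg[OF p1 Bops_QpX[OF T z]] .
  finally show ?thesis .
qed

lemma Bops_shift:
  assumes T: "T \<in> Bops p X" and j: "j \<ge> 0" and x: "\<xi> \<in> QpX p X"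
  shows "T (vshift X j \<xi>) = vshift X j (T \<xi>)"
proof -
  have "T (vshift X j \<xi>) = T (vsmul p X (pk j) \<xi>)" using vsmul_pk[OF p1 j x] by simp
  also have "\<dots> = vsmul p X (pk j) (T \<xi>)" using Bops_smul[OF T pk_int[OF p1 j] x] .
  also have "\<dots> = vshift X j (T \<xi>)" using vsmul_pk[OF p1 j Bops_QpX[OF T x]] .
  finally show ?thesis .
qed

lemma bnd_mono: "bnd p X T m \<Longrightarrow> m \<le> m' \<Longrightarrow> bnd p X T m'"
  unfolding bnd_def using vlowb_mono[OF p1] by (meson diff_left_mono)

lemma bnd_agree:
  assumes "T \<in> Bops p X" "bnd p X T m" "\<xi> \<in> QpX p X" "\<eta> \<in> QpX p X" "vagree X n \<xi> \<eta>"
  shows "vagree X (n - m) (T \<xi>) (T \<eta>)"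
proof -
  have "vlowb X (vadd p X \<xi> (vneg p X \<eta>)) n" using vsub_iff[OF p1 assms(3,4)] assms(5) by simp
  moreover have "vadd p X \<xi> (vneg p X \<eta>) \<in> QpX p X" using assms(3,4) vadd_QpX[OF p1] vneg_QpX[OF p1] by blast
  ultimately have "vlowb X (T (vadd p X \<xi> (vneg p X \<eta>))) (n - m)" using assms(2) unfolding bnd_def by blast
  moreover have "T (vadd p X \<xi> (vneg p X \<eta>)) = vadd p X (T \<xi>) (vneg p X (T \<eta>))"
    using Bops_add[OF assms(1,3) vneg_QpX[OF p1 assms(4)]] Bops_neg[OF assms(1,4)] by simp
  ultimately show ?thesis using vsub_iff[OF p1 Bops_QpX[OF assms(1,3)] Bops_QpX[OF assms(1,4)]] by simp
qed

lemma op_neg_smul: "T \<in> Bops p X \<Longrightarrow> op_smul p X (negone p) T = op_neg p X T"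
  unfolding op_smul_def op_neg_def
proof (intro restrict_ext)
  fix \<xi> assume "T \<in> Bops p X" "\<xi> \<in> QpX p X"
  then show "vsmul p X (negone p) (T \<xi>) = vneg p X (T \<xi>)" using vsmul_negone[OF p1 Bops_QpX] by blast
qed

abbreviation "ONS T \<equiv> insert 0 {vnorm p X (T \<xi>) | \<xi>. \<xi> \<in> QpX p X \<and> vnorm p X \<xi> \<le> 1}"

lemma unit_ball_iff: "\<xi> \<in> QpX p X \<Longrightarrow> vnorm p X \<xi> \<le> 1 \<longleftrightarrow> vlowb X \<xi> 0"
  using vnorm_le_iff[OF p1, where \<xi>=\<xi> and n=0] by simp

lemma ON_le:
  assumes "\<And>\<xi>. \<xi> \<in> QpX p X \<Longrightarrow> T \<xi> \<in> QpX p X"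
    and "\<And>\<xi>. \<xi> \<in> QpX p X \<Longrightarrow> vlowb X \<xi> 0 \<Longrightarrow> vlowb X (T \<xi>) (- m)"
  shows "op_norm p X T \<le> real p powi m"
  unfolding op_norm_def
proof (rule cSup_least)
  fix y assume "y \<in> ONS T"
  then show "y \<le> real p powi m"
  proof
    assume "y = 0" then show ?thesis by simp
  next
    assume "y \<in> {vnorm p X (T \<xi>) | \<xi>. \<xi> \<in> QpX p X \<and> vnorm p X \<xi> \<le> 1}"
    then obtain \<xi> where x: "\<xi> \<in> QpX p X" "vnorm p X \<xi> \<le> 1" "y = vnorm p X (T \<xi>)" by blast
    then have "vlowb X (T \<xi>) (- m)" using assms(2) unit_ball_iff by blast
    then show ?thesis using vnorm_le_iff[OF p1 assms(1)[OF x(1)], of "- m"] x by simp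
  qed
qed simp

lemma ON_le_bnd:
  assumes "\<And>\<xi>. \<xi> \<in> QpX p X \<Longrightarrow> T \<xi> \<in> QpX p X" "bnd p X T m"
  shows "op_norm p X T \<le> real p powi m"
proof (rule ON_le[OF assms(1)])
  fix \<xi> assume "\<xi> \<in> QpX p X" "vlowb X \<xi> 0"
  then show "vlowb X (T \<xi>) (- m)" using assms(2)[unfolded bnd_def, rule_format, of \<xi> 0] by simp
qed

lemma ON_ge:
  assumes "\<And>\<xi>. \<xi> \<in> QpX p X \<Longrightarrow> T \<xi> \<in> QpX p X" "bnd p X T m0" "\<xi> \<in> QpX p X" "vnorm p X \<xi> \<le> 1"
  shows "vnorm p X (T \<xi>) \<le> op_norm p X T"
  unfolding op_norm_def
proof (rule cSup_upper)
  show "vnorm p X (T \<xi>) \<in> ONS T" using assms(3,4) by blast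
  show "bdd_above (ONS T)"
  proof (rule bdd_aboveI[where M = "real p powi m0"])
    fix y assume "y \<in> ONS T"
    then consider "y = 0" | \<eta> where "\<eta> \<in> QpX p X" "vnorm p X \<eta> \<le> 1" "y = vnorm p X (T \<eta>)" by blast
    then show "y \<le> real p powi m0"
    proof cases
      case 1 then show ?thesis by simp
    next
      case 2
      then have "vlowb X (T \<eta>) (- m0)" using assms(2) unit_ball_iff unfolding bnd_def by fastforce
      then show ?thesis using vnorm_le_iff[OF p1 assms(1)[OF 2(1)], of "- m0"] 2 by simp
    qed
  qed
qed

lemma ON2:
  assumes T: "T \<in> Bops p X" and b0: "bnd p X T m0" and lt: "op_norm p X T < real p powi m"
  shows "bnd p X T (m - 1)"
  unfolding bnd_def
proof (intro ballI allI impI)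
  fix \<xi> n assume x: "\<xi> \<in> QpX p X" and l: "vlowb X \<xi> n"
  define \<xi>' where "\<xi>' = vshift X (- n) \<xi>"
  have x': "\<xi>' \<in> QpX p X" unfolding \<xi>'_def by (rule vshift_QpX[OF p1 x]) (use l in simp)
  have l': "vlowb X \<xi>' 0" using vshift_lowb[OF p1, where X=X and j="- n" and \<xi>=\<xi> and n=n] l unfolding \<xi>'_def by simp
  have "vnorm p X (T \<xi>') \<le> op_norm p X T"
    using ON_ge[OF _ b0 x'] T x' l' unit_ball_iff by simp
  then have "vnorm p X (T \<xi>') < real p powi (- (1 - m) + 1)" using lt by simp
  then have t': "vlowb X (T \<xi>') (1 - m)" using vnorm_less_imp[OF p1 Bops_QpX[OF T x'], where n = "1 - m"] by simp
  show "vlowb X (T \<xi>) (n - (m - 1))"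
  proof (cases "n \<ge> 0")
    case True
    have "\<xi> = vshift X n \<xi>'" unfolding \<xi>'_def vshift_vshift[OF p1] using vshift_0[OF p1 x] by simp
    then have "T \<xi> = vshift X n (T \<xi>')" using Bops_shift[OF T True x'] by simp
    then show ?thesis using vshift_lowb[OF p1, where X=X and j=n and \<xi>="T \<xi>'" and n="1 - m"] t' by (simp add: algebra_simps)
  next
    case False
    have "T \<xi>' = vshift X (- n) (T \<xi>)" unfolding \<xi>'_def using Bops_shift[OF T _ x] False by simp
    then show ?thesis using vshift_lowb[OF p1, where X=X and j="- n" and \<xi>="T \<xi>" and n="n - (m - 1)"] t' by (simp add: algebra_simps)
  qed
qed

lemma bnd_least:
  assumes T: "T \<in> Bops p X" and b0: "bnd p X T m0" and nz: "T \<noteq> op_zero p X"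
  shows "\<exists>a. bnd p X T a \<and> \<not> bnd p X T (a - 1)"
proof (rule ccontr)
  assume "\<not> ?thesis"
  then have step: "bnd p X T a \<Longrightarrow> bnd p X T (a - 1)" for a by blast
  have all: "bnd p X T (m0 - int k)" for k
  proof (induction k)
    case 0 then show ?case using b0 by simp
  next
    case (Suc k)
    then have "bnd p X T (m0 - int k - 1)" using step by blast
    moreover have "m0 - int k - 1 = m0 - int (Suc k)" by simp
    ultimately show ?case by metis
  qed
  obtain \<xi> where x: "\<xi> \<in> QpX p X" "T \<xi> \<noteq> vzero X"
  proof -
    have "\<exists>\<xi>\<in>QpX p X. T \<xi> \<noteq> vzero X"
    proof (rule ccontr)
      assume "\<not> ?thesis"
      then have "T = op_zero p X" using Bops_ext[OF T] unfolding op_zero_def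
        by (intro extensionalityI[OF Bops_ext[OF T]]) auto
      then show False using nz by simp
    qed
    then show ?thesis using that by blast
  qed
  obtain n1 where n1: "vlowb X \<xi> n1" using QpX_lowb_ex[OF p1 x(1)] by blast
  obtain n0 where n0: "\<not> vlowb X (T \<xi>) n0"
  proof -
    have "\<exists>n0. \<not> vlowb X (T \<xi>) n0"
    proof (rule ccontr)
      assume "\<not> ?thesis"
      then have "\<And>n. vagree X n (T \<xi>) (vzero X)" using vlowb_agree[OF p1] by blast
      then have "T \<xi> = vzero X" by (rule vagree_all_eq[OF p1 Bops_QpX[OF T x(1)] vzero_QpX[OF p1]])
      then show False using x(2) by simp
    qed
    then show ?thesis using that by blast
  qed
  define k where "k = nat (m0 - n1 + n0)"
  have "vlowb X (T \<xi>) (n1 - (m0 - int k))" using all[of k] x(1) n1 unfolding bnd_def by blast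
  moreover have "n0 \<le> n1 - (m0 - int k)" unfolding k_def by simp
  ultimately show False using n0 vlowb_mono[OF p1] by blast
qed

lemma ON_exact:
  assumes T: "T \<in> Bops p X" and b: "bnd p X T a" and nb: "\<not> bnd p X T (a - 1)"
  shows "op_norm p X T = real p powi a"
proof -
  have "op_norm p X T \<le> real p powi a" using ON_le_bnd[OF _ b] T by simp
  moreover have "\<not> op_norm p X T < real p powi a" using ON2[OF T b] nb by blast
  ultimately show ?thesis by simp
qed

lemma bnd_comp:
  assumes S: "S \<in> Bops p X" and T: "T \<in> Bops p X" and a: "bnd p X S a" and b: "bnd p X T b"
  shows "bnd p X (op_comp p X S T) (a + b)"
  unfolding bnd_def
proof (intro ballI allI impI)
  fix \<xi> n assume x: "\<xi> \<in> QpX p X" and l: "vlowb X \<xi> n"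
  have 1: "T \<xi> \<in> QpX p X" by (rule Bops_QpX[OF T x])
  have "vlowb X (T \<xi>) (n - b)" using b x l unfolding bnd_def by blast
  then have "vlowb X (S (T \<xi>)) (n - b - a)" using a 1 unfolding bnd_def by blast
  then show "vlowb X (op_comp p X S T \<xi>) (n - (a + b))" using x by (simp add: algebra_simps)
qed

lemma bnd_add: "S \<in> Bops p X \<Longrightarrow> T \<in> Bops p X \<Longrightarrow> bnd p X S a \<Longrightarrow> bnd p X T a \<Longrightarrow> bnd p X (op_add p X S T) a"
  unfolding bnd_def by (simp add: vlowb_add[OF p1])

lemma bnd_neg: "T \<in> Bops p X \<Longrightarrow> bnd p X T a \<Longrightarrow> bnd p X (op_neg p X T) a"
  unfolding bnd_def by (simp add: vlowb_neg[OF p1])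

lemma bnd_id: "bnd p X (op_id p X) 0"
  unfolding bnd_def by simp

end


context
  fixes p :: nat
  assumes p1: "p > 1"
begin

lemma p0'': "p > 0" using p1 by simp

lemma Qp_istop: "istopology (\<lambda>U. U \<subseteq> padic p \<and>
     (\<forall>x\<in>U. \<exists>\<epsilon>>0. \<forall>y\<in>padic p. padic_dist p y x < \<epsilon> \<longrightarrow> y \<in> U))"
proof -
  define L where "L = (\<lambda>U. U \<subseteq> padic p \<and>
     (\<forall>x\<in>U. \<exists>\<epsilon>>0. \<forall>y\<in>padic p. padic_dist p y x < \<epsilon> \<longrightarrow> y \<in> U))"
  have i: "L (S \<inter> S')" if S: "L S" and S': "L S'" for S S'
  proof -
    have "\<exists>\<epsilon>>0. \<forall>y\<in>padic p. padic_dist p y x < \<epsilon> \<longrightarrow> y \<in> S \<inter> S'" if x: "x \<in> S \<inter> S'" for x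
    proof -
      obtain e1 where "e1 > 0" "\<forall>y\<in>padic p. padic_dist p y x < e1 \<longrightarrow> y \<in> S"
        using S x unfolding L_def by blast
      moreover obtain e2 where "e2 > 0" "\<forall>y\<in>padic p. padic_dist p y x < e2 \<longrightarrow> y \<in> S'"
        using S' x unfolding L_def by blast
      ultimately show ?thesis by (intro exI[of _ "min e1 e2"]) auto
    qed
    then show ?thesis using S S' unfolding L_def by blast
  qed
  have u: "L (\<Union>K)" if K: "\<forall>S\<in>K. L S" for K
  proof -
    have sub: "\<Union>K \<subseteq> padic p" using K unfolding L_def by blast
    have ex: "\<forall>x\<in>\<Union>K. \<exists>\<epsilon>>0. \<forall>y\<in>padic p. padic_dist p y x < \<epsilon> \<longrightarrow> y \<in> \<Union>K"
    proof
      fix x assume "x \<in> \<Union>K"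
      then obtain S where S: "S \<in> K" "x \<in> S" by blast
      then have "L S" using K by blast
      then obtain e where "e > 0" "\<forall>y\<in>padic p. padic_dist p y x < e \<longrightarrow> y \<in> S"
        using S(2) unfolding L_def by blast
      then show "\<exists>\<epsilon>>0. \<forall>y\<in>padic p. padic_dist p y x < \<epsilon> \<longrightarrow> y \<in> \<Union>K"
        using S(1) by (intro exI[of _ e]) auto
    qed
    show ?thesis unfolding L_def by (intro conjI sub ex)
  qed
  have "istopology L" unfolding istopology_def
  proof (intro conjI allI impI)
    fix S S' assume "L S" "L S'" then show "L (S \<inter> S')" by (rule i)
  next
    fix K assume "\<forall>S\<in>K. L S" then show "L (\<Union>K)" by (rule u)
  qed
  then show ?thesis unfolding L_def .
qed

lemma dist_agree:
  assumes x: "x \<in> padic p" and y: "y \<in> padic p"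
  shows "padic_dist p y x \<le> real p powi (- n) \<longleftrightarrow> agree n y x"
    and "padic_dist p y x < real p powi (- n + 1) \<Longrightarrow> agree n y x"
proof -
  have s: "padic_add p y (padic_neg p x) \<in> padic p" using x y by (simp add: add_padic[OF p1] neg_padic[OF p1])
  show "padic_dist p y x \<le> real p powi (- n) \<longleftrightarrow> agree n y x"
    unfolding padic_dist_def using norm_le_iff[OF p1 s] agree_sub_iff[OF p1 y x] by simp
  show "padic_dist p y x < real p powi (- n + 1) \<Longrightarrow> agree n y x"
    unfolding padic_dist_def using norm_less_imp[OF p1 s] agree_sub_iff[OF p1 y x] by simp
qed

lemma openin_Qp: "openin (Qp_top p) U \<longleftrightarrow> U \<subseteq> padic p \<and> (\<forall>x\<in>U. \<exists>n. \<forall>y\<in>padic p. agree n y x \<longrightarrow> y \<in> U)"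
proof -
  have "openin (Qp_top p) U \<longleftrightarrow> U \<subseteq> padic p \<and>
     (\<forall>x\<in>U. \<exists>\<epsilon>>0. \<forall>y\<in>padic p. padic_dist p y x < \<epsilon> \<longrightarrow> y \<in> U)"
    unfolding Qp_top_def using topology_inverse'[OF Qp_istop] by simp
  also have "\<dots> \<longleftrightarrow> U \<subseteq> padic p \<and> (\<forall>x\<in>U. \<exists>n. \<forall>y\<in>padic p. agree n y x \<longrightarrow> y \<in> U)"
  proof (intro conj_cong refl ball_cong iffI)
    fix x assume U: "U \<subseteq> padic p" and xU: "x \<in> U"
    then have x: "x \<in> padic p" by blast
    {
      assume "\<exists>\<epsilon>>0. \<forall>y\<in>padic p. padic_dist p y x < \<epsilon> \<longrightarrow> y \<in> U"
      then obtain e where e: "e > 0" "\<forall>y\<in>padic p. padic_dist p y x < e \<longrightarrow> y \<in> U" by blast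
      obtain k :: nat where k: "1 / e < real p ^ k" using real_arch_pow[of "real p" "1 / e"] p1 by auto
      have "real p powi (- int k) < e"
        using k e p1 by (simp add: power_int_minus field_simps)
      then show "\<exists>n. \<forall>y\<in>padic p. agree n y x \<longrightarrow> y \<in> U"
        using e dist_agree(1)[OF x] by (intro exI[of _ "int k"]) force
    }
    {
      assume "\<exists>n. \<forall>y\<in>padic p. agree n y x \<longrightarrow> y \<in> U"
      then obtain n where n: "\<forall>y\<in>padic p. agree n y x \<longrightarrow> y \<in> U" by blast
      show "\<exists>\<epsilon>>0. \<forall>y\<in>padic p. padic_dist p y x < \<epsilon> \<longrightarrow> y \<in> U"
        using n dist_agree(2)[OF x] p1 by (intro exI[of _ "real p powi (- n + 1)"]) auto
    }
  qed
  finally show ?thesis .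
qed

lemma ball_open: "openin (Qp_top p) {y \<in> padic p. agree n y x}"
  unfolding openin_Qp using agree_trans[OF p1] by blast

lemma padic_open: "openin (Qp_top p) (padic p)"
  unfolding openin_Qp by blast

lemma topspace_Qp[simp]: "topspace (Qp_top p) = padic p"
proof
  show "topspace (Qp_top p) \<subseteq> padic p" unfolding topspace_def using openin_Qp by blast
  show "padic p \<subseteq> topspace (Qp_top p)" using padic_open openin_subset by blast
qed

abbreviation "PT X \<equiv> product_topology (\<lambda>i. Qp_top p) X"

lemma open_cyl:
  assumes "finite F"
  shows "openin (PT X) (PiE X (\<lambda>i. if i \<in> F then {y \<in> padic p. agree n y (a i)} else padic p))"
proof (rule product_topology_basis)
  show "openin (Qp_top p) (if i \<in> F then {y \<in> padic p. agree n y (a i)} else padic p)" for i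
    using ball_open padic_open by simp
  show "finite {i. (if i \<in> F then {y \<in> padic p. agree n y (a i)} else padic p) \<noteq> topspace (Qp_top p)}"
    by (rule finite_subset[OF _ assms]) auto
qed

lemma prod_nbhd:
  assumes W: "openin (PT X) W" and x0: "\<xi>0 \<in> W"
  shows "\<exists>F n. finite F \<and> (\<forall>\<xi>\<in>PiE X (\<lambda>_. padic p). (\<forall>j\<in>F. j \<in> X \<longrightarrow> agree n (\<xi> j) (\<xi>0 j)) \<longrightarrow> \<xi> \<in> W)"
proof -
  obtain Xs where Xs: "\<xi>0 \<in> PiE X Xs" "\<forall>i. openin (Qp_top p) (Xs i)"
    "finite {i. Xs i \<noteq> topspace (Qp_top p)}" "PiE X Xs \<subseteq> W"
    using product_topology_open_contains_basis[OF W x0] by blast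
  define F where "F = {i. Xs i \<noteq> padic p}"
  have fF: "finite F" using Xs(3) unfolding F_def by simp
  have "\<forall>i\<in>F\<inter>X. \<exists>n. \<forall>y\<in>padic p. agree n y (\<xi>0 i) \<longrightarrow> y \<in> Xs i"
    using Xs(1,2) openin_Qp by (auto simp: PiE_iff)
  then obtain nf where nf: "\<forall>i\<in>F\<inter>X. \<forall>y\<in>padic p. agree (nf i) y (\<xi>0 i) \<longrightarrow> y \<in> Xs i" by metis
  define n where "n = Max (insert 0 (nf ` (F \<inter> X)))"
  have nn: "i \<in> F \<inter> X \<Longrightarrow> nf i \<le> n" for i unfolding n_def using fF by (intro Max_ge) auto
  have "\<forall>\<xi>\<in>PiE X (\<lambda>_. padic p). (\<forall>j\<in>F. j \<in> X \<longrightarrow> agree n (\<xi> j) (\<xi>0 j)) \<longrightarrow> \<xi> \<in> W"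
  proof (intro ballI impI)
    fix \<xi> assume x: "\<xi> \<in> PiE X (\<lambda>_. padic p)" and a: "\<forall>j\<in>F. j \<in> X \<longrightarrow> agree n (\<xi> j) (\<xi>0 j)"
    have "\<xi> \<in> PiE X Xs"
    proof (subst PiE_iff, intro conjI ballI)
      fix i assume i: "i \<in> X"
      show "\<xi> i \<in> Xs i"
      proof (cases "i \<in> F")
        case True
        then show ?thesis using nf a nn[of i] i x agree_mono[OF p1] by (force simp: PiE_iff)
      next
        case False then show ?thesis using x i unfolding F_def by (auto simp: PiE_iff)
      qed
    next
      show "\<xi> \<in> extensional X" using x by (simp add: PiE_iff)
    qed
    then show "\<xi> \<in> W" using Xs(4) by blast
  qed
  then show ?thesis using fF by blast
qed

lemma box_sub: "finite P \<Longrightarrow> box p X P \<subseteq> QpX p X"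
proof
  fix \<xi> assume P: "finite P" and x: "\<xi> \<in> box p X P"
  have "{i\<in>X. \<not> lowb (\<xi> i) 0} \<subseteq> P" using x unfolding box_def padic_int_iff[OF p1] by auto
  then show "\<xi> \<in> QpX p X" using x P unfolding box_def QpX_iff[OF p1] by (auto intro: finite_subset)
qed

lemma openin_sub_local:
  assumes "S \<subseteq> B" "\<And>x. x \<in> S \<Longrightarrow> \<exists>W. openin (PT X) W \<and> x \<in> W \<and> W \<inter> B \<subseteq> S"
  shows "openin (subtopology (PT X) B) S"
proof (subst openin_subopen, intro ballI)
  fix x assume "x \<in> S"
  then obtain W where W: "openin (PT X) W" "x \<in> W" "W \<inter> B \<subseteq> S" using assms(2) by blast
  show "\<exists>T. openin (subtopology (PT X) B) T \<and> x \<in> T \<and> T \<subseteq> S"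
    using W assms(1) \<open>x \<in> S\<close> by (intro exI[of _ "W \<inter> B"]) (auto simp: openin_subtopology)
qed

lemma cyl_tau_open:
  assumes "finite F"
  shows "tau_open p X {\<eta> \<in> QpX p X. \<forall>j\<in>F. j \<in> X \<longrightarrow> agree n (\<eta> j) (a j)}"
  unfolding tau_open_def
proof (intro conjI allI impI)
  show "{\<eta> \<in> QpX p X. \<forall>j\<in>F. j \<in> X \<longrightarrow> agree n (\<eta> j) (a j)} \<subseteq> QpX p X" by blast
  fix P assume P: "finite P \<and> P \<subseteq> X"
  define C where "C = PiE X (\<lambda>i. if i \<in> F then {y \<in> padic p. agree n y (a i)} else padic p)"
  have "{\<eta> \<in> QpX p X. \<forall>j\<in>F. j \<in> X \<longrightarrow> agree n (\<eta> j) (a j)} \<inter> box p X P = C \<inter> box p X P"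
  proof (intro equalityI subsetI)
    fix \<eta> assume e: "\<eta> \<in> {\<eta> \<in> QpX p X. \<forall>j\<in>F. j \<in> X \<longrightarrow> agree n (\<eta> j) (a j)} \<inter> box p X P"
    then have q: "\<eta> \<in> QpX p X" and ag: "\<forall>j\<in>F. j \<in> X \<longrightarrow> agree n (\<eta> j) (a j)" and b: "\<eta> \<in> box p X P" by auto
    have "\<eta> \<in> C" unfolding C_def PiE_iff
      using QpX_padic[OF p1 q] QpX_ext[OF p1 q] ag by auto
    then show "\<eta> \<in> C \<inter> box p X P" using b by blast
  next
    fix \<eta> assume e: "\<eta> \<in> C \<inter> box p X P"
    then have q: "\<eta> \<in> QpX p X" using box_sub[of P X] P by blast
    have "\<forall>j\<in>F. j \<in> X \<longrightarrow> agree n (\<eta> j) (a j)"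
    proof (intro ballI impI)
      fix j assume "j \<in> F" "j \<in> X"
      moreover have "\<eta> \<in> C" using e by blast
      ultimately show "agree n (\<eta> j) (a j)" unfolding C_def PiE_iff by auto
    qed
    then show "\<eta> \<in> {\<eta> \<in> QpX p X. \<forall>j\<in>F. j \<in> X \<longrightarrow> agree n (\<eta> j) (a j)} \<inter> box p X P"
      using q e by blast
  qed
  moreover have "openin (PT X) C" unfolding C_def by (rule open_cyl[OF assms])
  ultimately show "openin (subtopology (PT X) (box p X P))
     ({\<eta> \<in> QpX p X. \<forall>j\<in>F. j \<in> X \<longrightarrow> agree n (\<eta> j) (a j)} \<inter> box p X P)"
    by (auto simp: openin_subtopology)
qed

lemma box0_tau_open: "tau_open p X (box p X {})"
  unfolding tau_open_def
proof (intro conjI allI impI)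
  show "box p X {} \<subseteq> QpX p X" by (rule box_sub) simp
  fix P assume P: "finite P \<and> P \<subseteq> X"
  define C where "C = PiE X (\<lambda>i. if i \<in> P then {y \<in> padic p. agree 0 y padic_zero} else padic p)"
  have "box p X {} \<inter> box p X P = C \<inter> box p X P"
  proof (intro equalityI subsetI)
    fix \<eta> assume e: "\<eta> \<in> box p X {} \<inter> box p X P"
    then have "\<eta> \<in> C" unfolding C_def box_def PiE_iff padic_int_iff[OF p1] lowb_agree_zero[OF p1] by auto
    then show "\<eta> \<in> C \<inter> box p X P" using e by blast
  next
    fix \<eta> assume e: "\<eta> \<in> C \<inter> box p X P"
    have "\<forall>j\<in>X. \<eta> j \<in> padic_int p"
    proof
      fix j assume j: "j \<in> X"
      show "\<eta> j \<in> padic_int p"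
      proof (cases "j \<in> P")
        case True
        have "\<eta> \<in> C" using e by blast
        then have "\<eta> j \<in> {y \<in> padic p. agree 0 y padic_zero}" using True j unfolding C_def PiE_iff by auto
        then show ?thesis unfolding padic_int_iff[OF p1] lowb_agree_zero[OF p1] by blast
      next
        case False then show ?thesis using e j unfolding box_def by auto
      qed
    qed
    then show "\<eta> \<in> box p X {} \<inter> box p X P" using e unfolding box_def by auto
  qed
  moreover have "openin (PT X) C" unfolding C_def using open_cyl[where F=P and n=0 and X=X and a="\<lambda>_. padic_zero"] P by simp
  ultimately show "openin (subtopology (PT X) (box p X P)) (box p X {} \<inter> box p X P)"
    by (auto simp: openin_subtopology)
qed

lemma bnd_from_level:
  assumes T: "T \<in> Bops p X" and a: "a \<ge> 0"
    and h: "\<And>\<xi>. \<xi> \<in> QpX p X \<Longrightarrow> vlowb X \<xi> a \<Longrightarrow> vlowb X (T \<xi>) b"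
  shows "bnd p X T (a - b)"
  unfolding bnd_def
proof (intro ballI allI impI)
  fix \<xi> n assume x: "\<xi> \<in> QpX p X" and l: "vlowb X \<xi> n"
  show "vlowb X (T \<xi>) (n - (a - b))"
  proof (cases "n \<le> a")
    case True
    define j where "j = a - n"
    have j: "j \<ge> 0" using True unfolding j_def by simp
    have x': "vshift X j \<xi> \<in> QpX p X" using vshift_QpX[OF p1 x] j by simp
    have "vlowb X (vshift X j \<xi>) a" using vshift_lowb[OF p1, where X=X and j=j and \<xi>=\<xi> and n=n] l unfolding j_def by simp
    then have "vlowb X (T (vshift X j \<xi>)) b" using h x' by blast
    then have "vlowb X (vshift X j (T \<xi>)) ((b - j) + j)" using Bops_shift[OF p1 T j x] by simp
    then have "vlowb X (T \<xi>) (b - j)" using vshift_lowb[OF p1] by blast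
    then show ?thesis unfolding j_def by (simp add: algebra_simps)
  next
    case False
    define j where "j = n - a"
    have j: "j > 0" using False unfolding j_def by simp
    have lj: "vlowb X \<xi> (- (- j))" using l vlowb_mono[OF p1, where X=X and m=j and n=n] a unfolding j_def by simp
    have x': "vshift X (- j) \<xi> \<in> QpX p X" using vshift_QpX[OF p1 x] lj by blast
    have "vlowb X (vshift X (- j) \<xi>) (n + - j)" using vshift_lowb[OF p1] l by blast
    then have "vlowb X (T (vshift X (- j) \<xi>)) b" using h x' unfolding j_def by simp
    moreover have "\<xi> = vshift X j (vshift X (- j) \<xi>)" using vshift_vshift[OF p1, where X=X and a=j and b="- j" and \<xi>=\<xi>] vshift_0[OF p1 x] by simp
    then have "T \<xi> = vshift X j (T (vshift X (- j) \<xi>))" using Bops_shift[OF p1 T _ x', of j] j by simp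
    ultimately have "vlowb X (T \<xi>) (b + j)"
      using vshift_lowb[OF p1, where X=X and j=j and \<xi>="T (vshift X (- j) \<xi>)" and n=b] by simp
    then show ?thesis unfolding j_def by (simp add: algebra_simps)
  qed
qed

lemma Bops_bnd_ex:
  assumes T: "T \<in> Bops p X"
  shows "\<exists>m. bnd p X T m"
proof -
  define V where "V = {\<xi> \<in> QpX p X. T \<xi> \<in> box p X {}}"
  have "tau_open p X V" using Bops_tau[OF p1 T] box0_tau_open unfolding tau_continuous_def V_def by blast
  then have "openin (subtopology (PT X) (box p X {})) (V \<inter> box p X {})" unfolding tau_open_def by blast
  then obtain W where W: "openin (PT X) W" "V \<inter> box p X {} = W \<inter> box p X {}"
    unfolding openin_subtopology by blast
  have z: "vzero X \<in> box p X {}" unfolding box_def vzero_def using p0'' by (auto simp: PiE_iff)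
  have "vzero X \<in> V" unfolding V_def using Bops_zero[OF p1 T] z vzero_QpX[OF p1] by simp
  then have "vzero X \<in> W" using W(2) z by blast
  then obtain F n where F: "finite F" "\<forall>\<xi>\<in>PiE X (\<lambda>_. padic p). (\<forall>j\<in>F. j \<in> X \<longrightarrow> agree n (\<xi> j) (vzero X j)) \<longrightarrow> \<xi> \<in> W"
    using prod_nbhd[OF W(1)] by blast
  define n' where "n' = max n 0"
  have "bnd p X T (n' - 0)"
  proof (rule bnd_from_level[OF T])
    show "n' \<ge> 0" unfolding n'_def by simp
    fix \<xi> assume x: "\<xi> \<in> QpX p X" and l: "vlowb X \<xi> n'"
    have pe: "\<xi> \<in> PiE X (\<lambda>_. padic p)" using x unfolding QpX_def by blast
    have "\<forall>j\<in>F. j \<in> X \<longrightarrow> agree n (\<xi> j) (vzero X j)"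
    proof (intro ballI impI)
      fix j assume "j \<in> F" "j \<in> X"
      then have "agree n' (\<xi> j) padic_zero" using l unfolding vlowb_def lowb_agree_zero[OF p1] by blast
      then have "agree n (\<xi> j) padic_zero" using agree_mono[OF p1, of n n'] unfolding n'_def by simp
      then show "agree n (\<xi> j) (vzero X j)" using \<open>j \<in> X\<close> unfolding vzero_def by simp
    qed
    then have "\<xi> \<in> W" using F pe by blast
    moreover have "\<xi> \<in> box p X {}" using pe l lowb_mono unfolding box_def vlowb_def padic_int_iff[OF p1] n'_def
      by (auto simp: PiE_iff)
    ultimately have "\<xi> \<in> V" using W(2) by blast
    then show "vlowb X (T \<xi>) 0" unfolding V_def box_def vlowb_def padic_int_iff[OF p1] by auto
  qed
  then show ?thesis by blast
qed

end


definition vlim :: "'x set \<Rightarrow> (nat \<Rightarrow> 'x vec) \<Rightarrow> 'x vec" where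
  "vlim X \<sigma> = (\<lambda>i\<in>X. \<lambda>k. \<sigma> (SOME N. \<forall>M\<ge>N. vagree X (k + 1) (\<sigma> M) (\<sigma> N)) i k)"

definition vcauchy :: "'x set \<Rightarrow> (nat \<Rightarrow> 'x vec) \<Rightarrow> bool" where
  "vcauchy X \<sigma> \<longleftrightarrow> (\<forall>n. \<exists>N. \<forall>M\<ge>N. vagree X n (\<sigma> M) (\<sigma> N))"

context
  fixes p :: nat and X :: "'x set"
  assumes p1: "p > 1"
begin

lemma pp[simp]: "1 < p" using p1 .

lemma vlim_agree:
  assumes c: "vcauchy X \<sigma>" and N: "\<forall>M\<ge>N. vagree X n (\<sigma> M) (\<sigma> N)"
  shows "vagree X n (vlim X \<sigma>) (\<sigma> N)"
  unfolding vagree_def agree_def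
proof (intro ballI allI impI)
  fix i k assume i: "i \<in> X" and k: "k < n"
  define Nk where "Nk = (SOME N. \<forall>M\<ge>N. vagree X (k + 1) (\<sigma> M) (\<sigma> N))"
  have "\<exists>N. \<forall>M\<ge>N. vagree X (k + 1) (\<sigma> M) (\<sigma> N)" using c unfolding vcauchy_def by blast
  then have Nk: "\<forall>M\<ge>Nk. vagree X (k + 1) (\<sigma> M) (\<sigma> Nk)"
    unfolding Nk_def by (rule someI_ex)
  define M where "M = max N Nk"
  have "\<sigma> M i k = \<sigma> Nk i k" using Nk[rule_format, of M] i unfolding M_def vagree_def agree_def by auto
  moreover have "\<sigma> M i k = \<sigma> N i k" using N[rule_format, of M] i k unfolding M_def vagree_def agree_def by auto
  ultimately show "vlim X \<sigma> i k = \<sigma> N i k" unfolding vlim_def Nk_def using i by simp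
qed

lemma vlim_QpX:
  assumes c: "vcauchy X \<sigma>" and q: "\<And>N. \<sigma> N \<in> QpX p X"
  shows "vlim X \<sigma> \<in> QpX p X"
proof -
  obtain N0 where N0: "\<forall>M\<ge>N0. vagree X 0 (\<sigma> M) (\<sigma> N0)" using c unfolding vcauchy_def by blast
  have a0: "vagree X 0 (vlim X \<sigma>) (\<sigma> N0)" by (rule vlim_agree[OF c N0])
  have pad: "vlim X \<sigma> i \<in> padic p" if i: "i \<in> X" for i
  proof -
    define Nk where "Nk k = (SOME N. \<forall>M\<ge>N. vagree X (k + 1) (\<sigma> M) (\<sigma> N))" for k
    have dig: "vlim X \<sigma> i k < p" for k
      using QpX_padic[OF p1 q i] padic_digit_less unfolding vlim_def using i by auto
    obtain L where L: "lowb (\<sigma> N0 i) L" using padic_lowb_ex[OF QpX_padic[OF p1 q i]] by blast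
    have "\<forall>k<min L 0. vlim X \<sigma> i k = 0"
    proof (intro allI impI)
      fix k assume "k < min L 0"
      then show "vlim X \<sigma> i k = 0" using a0 L i unfolding vagree_def agree_def lowb_def by auto
    qed
    then show ?thesis unfolding padic_def using dig by blast
  qed
  have pie: "vlim X \<sigma> \<in> PiE X (\<lambda>_. padic p)" using pad unfolding vlim_def by (auto simp: PiE_iff)
  have "{i\<in>X. \<not> lowb (vlim X \<sigma> i) 0} = {i\<in>X. \<not> lowb (\<sigma> N0 i) 0}"
    using a0 unfolding vagree_def agree_def lowb_def by auto
  then show ?thesis using q[of N0] pie unfolding QpX_iff[OF p1] by simp
qed

lemma h_agree:
  assumes hQ: "\<And>\<xi>. \<xi> \<in> QpX p X \<Longrightarrow> h \<xi> \<in> QpX p X"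
    and hadd: "\<And>\<xi> \<eta>. \<xi> \<in> QpX p X \<Longrightarrow> \<eta> \<in> QpX p X \<Longrightarrow> h (vadd p X \<xi> \<eta>) = vadd p X (h \<xi>) (h \<eta>)"
    and hneg: "\<And>\<xi>. \<xi> \<in> QpX p X \<Longrightarrow> h (vneg p X \<xi>) = vneg p X (h \<xi>)"
    and hb: "bnd p X h m"
    and x: "\<xi> \<in> QpX p X" and y: "\<eta> \<in> QpX p X" and a: "vagree X n \<xi> \<eta>"
  shows "vagree X (n - m) (h \<xi>) (h \<eta>)"
proof -
  have "vlowb X (vadd p X \<xi> (vneg p X \<eta>)) n" using vsub_iff[OF p1 x y] a by simp
  moreover have "vadd p X \<xi> (vneg p X \<eta>) \<in> QpX p X" using vadd_QpX[OF p1 x vneg_QpX[OF p1 y]] .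
  ultimately have "vlowb X (h (vadd p X \<xi> (vneg p X \<eta>))) (n - m)" using hb unfolding bnd_def by blast
  moreover have "h (vadd p X \<xi> (vneg p X \<eta>)) = vadd p X (h \<xi>) (vneg p X (h \<eta>))"
    using hadd[OF x vneg_QpX[OF p1 y]] hneg[OF y] by simp
  ultimately show ?thesis using vsub_iff[OF p1 hQ[OF x] hQ[OF y]] by simp
qed

lemma tau_cont_approx:
  assumes hQ: "\<And>\<xi>. \<xi> \<in> QpX p X \<Longrightarrow> h \<xi> \<in> QpX p X"
    and hadd: "\<And>\<xi> \<eta>. \<xi> \<in> QpX p X \<Longrightarrow> \<eta> \<in> QpX p X \<Longrightarrow> h (vadd p X \<xi> \<eta>) = vadd p X (h \<xi>) (h \<eta>)"
    and hneg: "\<And>\<xi>. \<xi> \<in> QpX p X \<Longrightarrow> h (vneg p X \<xi>) = vneg p X (h \<xi>)"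
    and hb: "bnd p X h 0"
    and S: "\<And>N. S N \<in> Bops p X"
    and appr: "\<And>k. \<exists>N. \<forall>\<xi>\<in>QpX p X. \<forall>n. vlowb X \<xi> n \<longrightarrow> vagree X (n + k) (S N \<xi>) (h \<xi>)"
  shows "tau_continuous p X h"
  unfolding tau_continuous_def
proof (intro allI impI)
  fix U assume U: "tau_open p X U"
  define V where "V = {\<xi> \<in> QpX p X. h \<xi> \<in> U}"
  show "tau_open p X {\<xi> \<in> QpX p X. h \<xi> \<in> U}"
    unfolding V_def[symmetric] tau_open_def
  proof (intro conjI allI impI)
    show "V \<subseteq> QpX p X" unfolding V_def by blast
    fix P assume P: "finite P \<and> P \<subseteq> X"
    show "openin (subtopology (product_topology (\<lambda>i. Qp_top p) X) (box p X P)) (V \<inter> box p X P)"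
    proof (rule openin_sub_local[OF p1])
      show "V \<inter> box p X P \<subseteq> box p X P" by blast
      fix \<xi>0 assume x0: "\<xi>0 \<in> V \<inter> box p X P"
      then have x0Q: "\<xi>0 \<in> QpX p X" and hx0: "h \<xi>0 \<in> U" unfolding V_def by auto
      define \<eta>0 where "\<eta>0 = h \<xi>0"
      have e0Q: "\<eta>0 \<in> QpX p X" unfolding \<eta>0_def by (rule hQ[OF x0Q])
      define Q where "Q = {j\<in>X. \<not> lowb (\<eta>0 j) 0}"
      have fQ: "finite Q \<and> Q \<subseteq> X" using e0Q unfolding QpX_iff[OF p1] Q_def by auto
      have e0B: "\<eta>0 \<in> box p X Q"
        using e0Q unfolding box_def Q_def QpX_def padic_int_iff[OF p1] by (auto simp: PiE_iff)
      obtain W1 where W1: "openin (product_topology (\<lambda>i. Qp_top p) X) W1" "U \<inter> box p X Q = W1 \<inter> box p X Q"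
        using U fQ unfolding tau_open_def openin_subtopology by blast
      have "\<eta>0 \<in> W1" using W1(2) e0B hx0 unfolding \<eta>0_def by blast
      then obtain F n1 where F: "finite F"
        "\<forall>\<eta>\<in>PiE X (\<lambda>_. padic p). (\<forall>j\<in>F. j \<in> X \<longrightarrow> agree n1 (\<eta> j) (\<eta>0 j)) \<longrightarrow> \<eta> \<in> W1"
        using prod_nbhd[OF p1 W1(1)] by blast
      obtain n0 where n0: "n0 \<le> 0" "vlowb X \<xi>0 n0" using QpX_lowb_ex[OF p1 x0Q] by blast
      obtain N where N: "\<forall>\<xi>\<in>QpX p X. \<forall>n. vlowb X \<xi> n \<longrightarrow> vagree X (n + (n1 - n0)) (S N \<xi>) (h \<xi>)"
        using appr by blast
      define C where "C = {\<eta> \<in> QpX p X. \<forall>j\<in>F. j \<in> X \<longrightarrow> agree n1 (\<eta> j) (S N \<xi>0 j)}"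
      have Copen: "tau_open p X C" unfolding C_def by (rule cyl_tau_open[OF p1 F(1)])
      define V' where "V' = {\<xi> \<in> QpX p X. S N \<xi> \<in> C}"
      have "tau_open p X V'" using Bops_tau[OF p1 S] Copen unfolding tau_continuous_def V'_def by blast
      then obtain W2 where W2: "openin (product_topology (\<lambda>i. Qp_top p) X) W2" "V' \<inter> box p X P = W2 \<inter> box p X P"
        using P unfolding tau_open_def openin_subtopology by blast
      have SN0: "S N \<xi>0 \<in> QpX p X" using Bops_QpX[OF p1 S x0Q] .
      have "\<xi>0 \<in> V'" unfolding V'_def C_def using x0Q SN0 by (simp add: agree_def)
      then have x0W2: "\<xi>0 \<in> W2" using W2(2) x0 by blast
      define W3 where "W3 = PiE X (\<lambda>i. if i \<in> P then {y \<in> padic p. agree 0 y (\<xi>0 i)} else padic p)"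
      have W3: "openin (product_topology (\<lambda>i. Qp_top p) X) W3" unfolding W3_def using open_cyl[OF p1] P by blast
      have x0W3: "\<xi>0 \<in> W3" using x0Q unfolding W3_def QpX_def by (auto simp: PiE_iff agree_def)
      show "\<exists>W. openin (product_topology (\<lambda>i. Qp_top p) X) W \<and> \<xi>0 \<in> W \<and> W \<inter> box p X P \<subseteq> V \<inter> box p X P"
      proof (intro exI conjI)
        show "openin (product_topology (\<lambda>i. Qp_top p) X) (W2 \<inter> W3)" using W2(1) W3 by blast
        show "\<xi>0 \<in> W2 \<inter> W3" using x0W2 x0W3 by blast
        show "W2 \<inter> W3 \<inter> box p X P \<subseteq> V \<inter> box p X P"
        proof
          fix \<xi> assume xi: "\<xi> \<in> W2 \<inter> W3 \<inter> box p X P"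
          have xQ: "\<xi> \<in> QpX p X" using xi box_sub[OF p1, of P X] P by blast
          have ag0: "vagree X 0 \<xi> \<xi>0" unfolding vagree_def
          proof
            fix i assume i: "i \<in> X"
            show "agree 0 (\<xi> i) (\<xi>0 i)"
            proof (cases "i \<in> P")
              case True
              have "\<xi> \<in> W3" using xi by blast
              then show ?thesis using i True unfolding W3_def PiE_iff by auto
            next
              case False
              then have "lowb (\<xi> i) 0" "lowb (\<xi>0 i) 0"
                using xi x0 i unfolding box_def padic_int_iff[OF p1] by auto
              then show ?thesis unfolding lowb_def agree_def by auto
            qed
          qed
          have xl: "vlowb X \<xi> n0"
          proof -
            have "vagree X n0 \<xi> \<xi>0" using vagree_mono[OF p1 n0(1) ag0] .
            moreover have "vagree X n0 \<xi>0 (vzero X)" using n0(2) vlowb_agree[OF p1] by blast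
            ultimately show ?thesis using vlowb_agree[OF p1] vagree_trans[OF p1] by blast
          qed
          have hag: "vagree X 0 (h \<xi>) (h \<xi>0)"
            using h_agree[OF hQ hadd hneg hb xQ x0Q ag0] by simp
          have hxQ: "h \<xi> \<in> QpX p X" by (rule hQ[OF xQ])
          have hxB: "h \<xi> \<in> box p X Q"
          proof -
            have "\<forall>j\<in>X - Q. h \<xi> j \<in> padic_int p"
            proof
              fix j assume j: "j \<in> X - Q"
              then have "lowb (\<eta>0 j) 0" unfolding Q_def by blast
              moreover have "agree 0 (h \<xi> j) (\<eta>0 j)" using hag j unfolding vagree_def \<eta>0_def by blast
              ultimately have "lowb (h \<xi> j) 0" unfolding lowb_def agree_def by auto
              then show "h \<xi> j \<in> padic_int p" using QpX_padic[OF p1 hxQ] j padic_int_iff[OF p1] by blast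
            qed
            then show ?thesis using hxQ unfolding box_def QpX_def by blast
          qed
          have "\<xi> \<in> V'" using xi W2(2) by blast
          then have c1: "\<forall>j\<in>F. j \<in> X \<longrightarrow> agree n1 (S N \<xi> j) (S N \<xi>0 j)" unfolding V'_def C_def by blast
          have c2: "vagree X n1 (S N \<xi>) (h \<xi>)" using N xQ xl by fastforce
          have c3: "vagree X n1 (S N \<xi>0) (h \<xi>0)" using N x0Q n0(2) by fastforce
          have "\<forall>j\<in>F. j \<in> X \<longrightarrow> agree n1 (h \<xi> j) (\<eta>0 j)"
          proof (intro ballI impI)
            fix j assume "j \<in> F" "j \<in> X"
            then have "agree n1 (S N \<xi> j) (S N \<xi>0 j)" "agree n1 (S N \<xi> j) (h \<xi> j)" "agree n1 (S N \<xi>0 j) (h \<xi>0 j)"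
              using c1 c2 c3 unfolding vagree_def by auto
            then show "agree n1 (h \<xi> j) (\<eta>0 j)" unfolding \<eta>0_def agree_def by auto
          qed
          moreover have "h \<xi> \<in> PiE X (\<lambda>_. padic p)" using hxQ unfolding QpX_def by blast
          ultimately have "h \<xi> \<in> W1" using F(2) by blast
          then have "h \<xi> \<in> U" using W1(2) hxB by blast
          then show "\<xi> \<in> V \<inter> box p X P" using xQ xi unfolding V_def by blast
        qed
      qed
    qed
  qed
qed

end


primrec Sn :: "nat \<Rightarrow> 'x set \<Rightarrow> 'x oper \<Rightarrow> nat \<Rightarrow> 'x oper" where
  "Sn p X w 0 = op_id p X"
| "Sn p X w (Suc N) = op_add p X (op_id p X) (op_comp p X w (Sn p X w N))"

definition hh :: "nat \<Rightarrow> 'x set \<Rightarrow> 'x oper \<Rightarrow> 'x oper" where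
  "hh p X w = (\<lambda>\<xi>\<in>QpX p X. vlim X (\<lambda>N. Sn p X w N \<xi>))"

context
  fixes p :: nat and X :: "'x set" and w :: "'x oper"
  assumes p1: "p > 1" and w: "w \<in> Bops p X" and bw: "bnd p X w (-1)"
    and SB: "\<And>N. Sn p X w N \<in> Bops p X"
begin

abbreviation "S \<equiv> Sn p X w"
abbreviation "H \<equiv> hh p X w"

lemma vagree_refl'[simp]: "vagree X n \<xi> \<xi>" unfolding vagree_def agree_def by simp

lemma SQ: "\<xi> \<in> QpX p X \<Longrightarrow> S N \<xi> \<in> QpX p X" using Bops_QpX[OF p1 SB] .

lemma wQ: "\<xi> \<in> QpX p X \<Longrightarrow> w \<xi> \<in> QpX p X" using Bops_QpX[OF p1 w] .

lemma S_Suc: "\<xi> \<in> QpX p X \<Longrightarrow> S (Suc N) \<xi> = vadd p X \<xi> (w (S N \<xi>))"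
  using SQ by (simp add: op_add_apply[OF p1] op_id_apply[OF p1] op_comp_apply[OF p1])

lemma S_0: "\<xi> \<in> QpX p X \<Longrightarrow> S 0 \<xi> = \<xi>"
  by (simp add: op_id_apply[OF p1])

lemma w_lowb: "\<xi> \<in> QpX p X \<Longrightarrow> vlowb X \<xi> n \<Longrightarrow> vlowb X (w \<xi>) (n + 1)"
  using bw unfolding bnd_def by fastforce

lemma S_step:
  assumes x: "\<xi> \<in> QpX p X" and l: "vlowb X \<xi> n"
  shows "vagree X (n + int N + 1) (S (Suc N) \<xi>) (S N \<xi>)"
proof (induction N)
  case 0
  have "vagree X (n + 1) (w \<xi>) (vzero X)" using w_lowb[OF x l] vlowb_agree[OF p1] by blast
  then have "vagree X (n + 1) (vadd p X \<xi> (w \<xi>)) (vadd p X \<xi> (vzero X))"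
    by (intro vagree_add[OF p1 x wQ[OF x] x vzero_QpX[OF p1]]) simp_all
  then show ?case using S_Suc[OF x, of 0] S_0[OF x] vadd_zero[OF p1 x] by simp
next
  case (Suc N)
  have "vagree X (n + int N + 1 - -1) (w (S (Suc N) \<xi>)) (w (S N \<xi>))"
    by (rule bnd_agree[OF p1 w bw SQ[OF x] SQ[OF x] Suc])
  then have "vagree X (n + int (Suc N) + 1) (vadd p X \<xi> (w (S (Suc N) \<xi>))) (vadd p X \<xi> (w (S N \<xi>)))"
    by (intro vagree_add[OF p1 x wQ[OF SQ[OF x]] x wQ[OF SQ[OF x]]]) (simp_all add: algebra_simps)
  then show ?case using S_Suc[OF x, of "Suc N"] S_Suc[OF x, of N] by simp
qed

lemma S_agree:
  assumes x: "\<xi> \<in> QpX p X" and l: "vlowb X \<xi> n" and M: "M \<ge> N"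
  shows "vagree X (n + int N + 1) (S M \<xi>) (S N \<xi>)"
proof -
  have "vagree X (n + int N + 1) (S (N + k) \<xi>) (S N \<xi>)" for k
  proof (induction k)
    case 0 then show ?case by simp
  next
    case (Suc k)
    have "vagree X (n + int (N + k) + 1) (S (Suc (N + k)) \<xi>) (S (N + k) \<xi>)" by (rule S_step[OF x l])
    then have "vagree X (n + int N + 1) (S (Suc (N + k)) \<xi>) (S (N + k) \<xi>)"
      by (rule vagree_mono[OF p1, rotated]) simp
    then show ?case using Suc vagree_trans[OF p1] by simp
  qed
  from this[of "M - N"] show ?thesis using M by simp
qed

lemma S_cauchy: "\<xi> \<in> QpX p X \<Longrightarrow> vcauchy X (\<lambda>N. S N \<xi>)"
proof -
  assume x: "\<xi> \<in> QpX p X"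
  obtain n where l: "vlowb X \<xi> n" using QpX_lowb_ex[OF p1 x] by blast
  show ?thesis unfolding vcauchy_def
  proof
    fix L
    show "\<exists>N. \<forall>M\<ge>N. vagree X L (S M \<xi>) (S N \<xi>)"
    proof (intro exI allI impI)
      fix M assume "M \<ge> nat (L - n)"
      then have "vagree X (n + int (nat (L - n)) + 1) (S M \<xi>) (S (nat (L - n)) \<xi>)" by (rule S_agree[OF x l])
      then show "vagree X L (S M \<xi>) (S (nat (L - n)) \<xi>)" by (rule vagree_mono[OF p1, rotated]) simp
    qed
  qed
qed

lemma H_apply: "\<xi> \<in> QpX p X \<Longrightarrow> H \<xi> = vlim X (\<lambda>N. S N \<xi>)"
  unfolding hh_def by simp

lemma HQ: "\<xi> \<in> QpX p X \<Longrightarrow> H \<xi> \<in> QpX p X"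
  using H_apply vlim_QpX[OF p1 S_cauchy SQ] by simp

lemma H_approx:
  assumes x: "\<xi> \<in> QpX p X" and l: "vlowb X \<xi> n"
  shows "vagree X (n + int N + 1) (H \<xi>) (S N \<xi>)"
  unfolding H_apply[OF x] by (rule vlim_agree[OF p1 S_cauchy[OF x]]) (use S_agree[OF x l] in blast)

lemma common_level:
  assumes "\<xi> \<in> QpX p X" "\<eta> \<in> QpX p X" "\<zeta> \<in> QpX p X"
  shows "\<exists>m. vlowb X \<xi> m \<and> vlowb X \<eta> m \<and> vlowb X \<zeta> m"
proof -
  obtain a b c where "vlowb X \<xi> a" "vlowb X \<eta> b" "vlowb X \<zeta> c"
    using QpX_lowb_ex[OF p1] assms by metis
  then have "vlowb X \<xi> (min a (min b c))" "vlowb X \<eta> (min a (min b c))" "vlowb X \<zeta> (min a (min b c))"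
    by (auto elim: vlowb_mono[OF p1, rotated])
  then show ?thesis by blast
qed

lemma eq_by_levels:
  assumes "\<xi> \<in> QpX p X" "\<eta> \<in> QpX p X"
    and "\<And>N. vagree X (m + int N + 1) \<xi> \<eta>"
  shows "\<xi> = \<eta>"
proof (rule QpX_eqI[OF p1 assms(1,2)])
  fix L
  have "vagree X (m + int (nat (L - m)) + 1) \<xi> \<eta>" by (rule assms(3))
  then show "vagree X L \<xi> \<eta>" by (rule vagree_mono[OF p1, rotated]) simp
qed

lemma H_add:
  assumes x: "\<xi> \<in> QpX p X" and y: "\<eta> \<in> QpX p X"
  shows "H (vadd p X \<xi> \<eta>) = vadd p X (H \<xi>) (H \<eta>)"
proof -
  have xy: "vadd p X \<xi> \<eta> \<in> QpX p X" by (rule vadd_QpX[OF p1 x y])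
  obtain m where m: "vlowb X \<xi> m" "vlowb X \<eta> m" "vlowb X (vadd p X \<xi> \<eta>) m"
    using common_level[OF x y xy] by blast
  show ?thesis
  proof (rule eq_by_levels[OF HQ[OF xy] vadd_QpX[OF p1 HQ[OF x] HQ[OF y]]])
    fix N
    have 1: "vagree X (m + int N + 1) (H (vadd p X \<xi> \<eta>)) (S N (vadd p X \<xi> \<eta>))" by (rule H_approx[OF xy m(3)])
    have 2: "S N (vadd p X \<xi> \<eta>) = vadd p X (S N \<xi>) (S N \<eta>)" by (rule Bops_add[OF p1 SB x y])
    have 3: "vagree X (m + int N + 1) (vadd p X (S N \<xi>) (S N \<eta>)) (vadd p X (H \<xi>) (H \<eta>))"
      by (rule vagree_add[OF p1 SQ[OF x] SQ[OF y] HQ[OF x] HQ[OF y]])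
         (rule vagree_sym[OF p1], rule H_approx; fact)+
    show "vagree X (m + int N + 1) (H (vadd p X \<xi> \<eta>)) (vadd p X (H \<xi>) (H \<eta>))"
      using vagree_trans[OF p1 1] 2 3 by simp
  qed
qed

lemma H_smul:
  assumes c: "c \<in> padic_int p" and x: "\<xi> \<in> QpX p X"
  shows "H (vsmul p X c \<xi>) = vsmul p X c (H \<xi>)"
proof -
  have cx: "vsmul p X c \<xi> \<in> QpX p X" by (rule vsmul_QpX[OF p1 c x])
  obtain m where m: "vlowb X \<xi> m" "vlowb X (vsmul p X c \<xi>) m" "vlowb X \<xi> m"
    using common_level[OF x cx x] by blast
  show ?thesis
  proof (rule eq_by_levels[OF HQ[OF cx] vsmul_QpX[OF p1 c HQ[OF x]]])
    fix N
    have 1: "vagree X (m + int N + 1) (H (vsmul p X c \<xi>)) (S N (vsmul p X c \<xi>))" by (rule H_approx[OF cx m(2)])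
    have 2: "S N (vsmul p X c \<xi>) = vsmul p X c (S N \<xi>)" by (rule Bops_smul[OF p1 SB c x])
    have 3: "vagree X (m + int N + 1) (vsmul p X c (S N \<xi>)) (vsmul p X c (H \<xi>))"
      by (rule vagree_smul[OF p1 c SQ[OF x] HQ[OF x]]) (rule vagree_sym[OF p1], rule H_approx[OF x m(1)])
    show "vagree X (m + int N + 1) (H (vsmul p X c \<xi>)) (vsmul p X c (H \<xi>))"
      using vagree_trans[OF p1 1] 2 3 by simp
  qed
qed

lemma H_neg: "\<xi> \<in> QpX p X \<Longrightarrow> H (vneg p X \<xi>) = vneg p X (H \<xi>)"
  using H_smul[OF negone_int[OF p1]] vsmul_negone[OF p1] HQ by metis

lemma H_bnd: "bnd p X H 0"
  unfolding bnd_def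
proof (intro ballI allI impI)
  fix \<xi> n assume x: "\<xi> \<in> QpX p X" and l: "vlowb X \<xi> n"
  have "vagree X (n + int 0 + 1) (H \<xi>) (S 0 \<xi>)" by (rule H_approx[OF x l])
  then have "vagree X n (H \<xi>) \<xi>" using S_0[OF x] vagree_mono[OF p1, of n "n + 1"] by simp
  moreover have "vagree X n \<xi> (vzero X)" using l vlowb_agree[OF p1] by blast
  ultimately have "vagree X n (H \<xi>) (vzero X)" by (rule vagree_trans[OF p1])
  then have "vlowb X (H \<xi>) n" unfolding vlowb_agree[OF p1] .
  then show "vlowb X (H \<xi>) (n - 0)" by simp
qed

lemma H_Bops: "H \<in> Bops p X"
  unfolding Bops_def
proof (intro CollectI conjI ballI)
  show "H \<in> extensional (QpX p X)" unfolding hh_def by simp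
  show "H ` QpX p X \<subseteq> QpX p X" using HQ by blast
  show "H (vadd p X \<xi> \<eta>) = vadd p X (H \<xi>) (H \<eta>)" if "\<xi> \<in> QpX p X" "\<eta> \<in> QpX p X" for \<xi> \<eta>
    using H_add that by blast
  show "H (vsmul p X c \<xi>) = vsmul p X c (H \<xi>)" if "c \<in> padic_int p" "\<xi> \<in> QpX p X" for c \<xi>
    using H_smul that by blast
  show "tau_continuous p X H"
  proof (rule tau_cont_approx[OF p1 HQ H_add H_neg H_bnd SB])
    fix k
    show "\<exists>N. \<forall>\<xi>\<in>QpX p X. \<forall>n. vlowb X \<xi> n \<longrightarrow> vagree X (n + k) (S N \<xi>) (H \<xi>)"
    proof (intro exI ballI allI impI)
      fix \<xi> n assume x: "\<xi> \<in> QpX p X" and l: "vlowb X \<xi> n"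
      have "vagree X (n + int (nat k) + 1) (H \<xi>) (S (nat k) \<xi>)" by (rule H_approx[OF x l])
      then have "vagree X (n + k) (H \<xi>) (S (nat k) \<xi>)" by (rule vagree_mono[OF p1, rotated]) simp
      then show "vagree X (n + k) (S (nat k) \<xi>) (H \<xi>)" by (rule vagree_sym[OF p1])
    qed
  qed (assumption)+
qed

lemma ON_nonneg:
  assumes "\<And>\<xi>. \<xi> \<in> QpX p X \<Longrightarrow> T \<xi> \<in> QpX p X"
    and "\<And>\<xi>. \<xi> \<in> QpX p X \<Longrightarrow> vlowb X \<xi> 0 \<Longrightarrow> vlowb X (T \<xi>) (- m)"
  shows "0 \<le> op_norm p X T"
  unfolding op_norm_def
proof (rule cSup_upper)
  show "(0::real) \<in> insert 0 {vnorm p X (T \<xi>) | \<xi>. \<xi> \<in> QpX p X \<and> vnorm p X \<xi> \<le> 1}" by simp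
  show "bdd_above (insert 0 {vnorm p X (T \<xi>) | \<xi>. \<xi> \<in> QpX p X \<and> vnorm p X \<xi> \<le> 1})"
  proof (rule bdd_aboveI[where M = "real p powi m"])
    fix y assume "y \<in> insert 0 {vnorm p X (T \<xi>) | \<xi>. \<xi> \<in> QpX p X \<and> vnorm p X \<xi> \<le> 1}"
    then consider "y = 0" | \<eta> where "\<eta> \<in> QpX p X" "vnorm p X \<eta> \<le> 1" "y = vnorm p X (T \<eta>)" by blast
    then show "y \<le> real p powi m"
    proof cases
      case 1 then show ?thesis using p1 by simp
    next
      case 2
      then have "vlowb X (T \<eta>) (- m)" using assms(2) unit_ball_iff[OF p1] by blast
      then show ?thesis using vnorm_le_iff[OF p1 assms(1)[OF 2(1)], of "- m"] 2 by simp
    qed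
  qed
qed

lemma S_H_norm: "0 \<le> op_norm p X (op_diff p X (S N) H) \<and> op_norm p X (op_diff p X (S N) H) \<le> real p powi (- (int N + 1))"
proof -
  have q: "op_diff p X (S N) H \<xi> \<in> QpX p X" if "\<xi> \<in> QpX p X" for \<xi>
    using that SQ HQ by (simp add: op_diff_apply[OF p1] vadd_QpX[OF p1] vneg_QpX[OF p1])
  have l: "vlowb X (op_diff p X (S N) H \<xi>) (- (- (int N + 1)))" if x: "\<xi> \<in> QpX p X" and l0: "vlowb X \<xi> 0" for \<xi>
  proof -
    have "vagree X (0 + int N + 1) (H \<xi>) (S N \<xi>)" by (rule H_approx[OF x l0])
    then have "vagree X (int N + 1) (S N \<xi>) (H \<xi>)" using vagree_sym[OF p1] by simp
    then have "vlowb X (op_diff p X (S N) H \<xi>) (int N + 1)"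
      using vsub_iff[OF p1 SQ[OF x] HQ[OF x]] x by (simp add: op_diff_apply[OF p1])
    then show ?thesis by (simp add: add.commute)
  qed
  show ?thesis
    using ON_nonneg[where T = "op_diff p X (S N) H" and m = "- (int N + 1)", OF q l]
      ON_le[OF p1, where T = "op_diff p X (S N) H" and m = "- (int N + 1)", OF q l] by blast
qed

lemma S_H_tendsto: "(\<lambda>N. op_norm p X (op_diff p X (S N) H)) \<longlonglongrightarrow> 0"
proof (rule tendsto_sandwich[where f = "\<lambda>_. 0" and h = "\<lambda>N. (1 / real p) ^ Suc N"])
  show "\<forall>\<^sub>F N in sequentially. 0 \<le> op_norm p X (op_diff p X (S N) H)" using S_H_norm by simp
  show "\<forall>\<^sub>F N in sequentially. op_norm p X (op_diff p X (S N) H) \<le> (1 / real p) ^ Suc N"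
  proof (intro always_eventually allI)
    fix N
    have e0: "int N + 1 = int (Suc N)" by simp
    have e1: "real p powi (- (int N + 1)) = inverse (real p powi (int (Suc N)))"
      unfolding e0 by (rule power_int_minus)
    have e2: "real p powi (int (Suc N)) = real p ^ Suc N" by (rule power_int_of_nat)
    have eq: "real p powi (- (int N + 1)) = (1 / real p) ^ Suc N"
      unfolding e1 e2 by (simp add: power_one_over inverse_eq_divide)
    have "op_norm p X (op_diff p X (S N) H) \<le> real p powi (- (int N + 1))" using S_H_norm by blast
    then show "op_norm p X (op_diff p X (S N) H) \<le> (1 / real p) ^ Suc N" by (simp only: eq)
  qed
  show "(\<lambda>_. 0) \<longlonglongrightarrow> (0::real)" by simp
  have "(\<lambda>N. (1 / real p) ^ N) \<longlonglongrightarrow> 0" using p1 by (intro LIMSEQ_power_zero) auto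
  then show "(\<lambda>N. (1 / real p) ^ Suc N) \<longlonglongrightarrow> 0" by (rule LIMSEQ_Suc)
qed

lemma S_w: "\<xi> \<in> QpX p X \<Longrightarrow> S N (w \<xi>) = w (S N \<xi>)"
proof (induction N)
  case 0 then show ?case using S_0 wQ by simp
next
  case (Suc N)
  have "S (Suc N) (w \<xi>) = vadd p X (w \<xi>) (w (w (S N \<xi>)))" using S_Suc[OF wQ[OF Suc.prems]] Suc by simp
  also have "\<dots> = w (vadd p X \<xi> (w (S N \<xi>)))" using Bops_add[OF p1 w Suc.prems wQ[OF SQ[OF Suc.prems]]] by simp
  also have "\<dots> = w (S (Suc N) \<xi>)" using S_Suc[OF Suc.prems] by simp
  finally show ?case .
qed

lemma H_w:
  assumes x: "\<xi> \<in> QpX p X"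
  shows "H (w \<xi>) = w (H \<xi>)"
proof -
  obtain m where m: "vlowb X \<xi> m" "vlowb X (w \<xi>) m" "vlowb X \<xi> m"
    using common_level[OF x wQ[OF x] x] by blast
  show ?thesis
  proof (rule eq_by_levels[OF HQ[OF wQ[OF x]] wQ[OF HQ[OF x]]])
    fix N
    have 1: "vagree X (m + int N + 1) (H (w \<xi>)) (S N (w \<xi>))" by (rule H_approx[OF wQ[OF x] m(2)])
    have 2: "vagree X (m + int N + 1 - -1) (w (S N \<xi>)) (w (H \<xi>))"
      by (rule bnd_agree[OF p1 w bw SQ[OF x] HQ[OF x]]) (rule vagree_sym[OF p1], rule H_approx[OF x m(1)])
    then have "vagree X (m + int N + 1) (w (S N \<xi>)) (w (H \<xi>))" by (rule vagree_mono[OF p1, rotated]) simp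
    then show "vagree X (m + int N + 1) (H (w \<xi>)) (w (H \<xi>))" using vagree_trans[OF p1 1] S_w[OF x] by simp
  qed
qed

lemma uH:
  assumes x: "\<xi> \<in> QpX p X"
  shows "vadd p X (H \<xi>) (vneg p X (w (H \<xi>))) = \<xi>"
proof -
  obtain m where m: "vlowb X \<xi> m" "vlowb X \<xi> m" "vlowb X \<xi> m" using common_level[OF x x x] by blast
  show ?thesis
  proof (rule eq_by_levels[OF vadd_QpX[OF p1 HQ[OF x] vneg_QpX[OF p1 wQ[OF HQ[OF x]]]] x])
    fix N
    have a1: "vagree X (m + int (Suc N) + 1) (H \<xi>) (S (Suc N) \<xi>)" by (rule H_approx[OF x m(1)])
    have a2: "vagree X (m + int N + 1 - -1) (w (H \<xi>)) (w (S N \<xi>))"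
      by (rule bnd_agree[OF p1 w bw HQ[OF x] SQ[OF x]]) (rule H_approx[OF x m(1)])
    have "vagree X (m + int N + 1) (vadd p X (H \<xi>) (vneg p X (w (H \<xi>))))
                                   (vadd p X (S (Suc N) \<xi>) (vneg p X (w (S N \<xi>))))"
    proof (rule vagree_add[OF p1 HQ[OF x] vneg_QpX[OF p1 wQ[OF HQ[OF x]]] SQ[OF x] vneg_QpX[OF p1 wQ[OF SQ[OF x]]]])
      show "vagree X (m + int N + 1) (H \<xi>) (S (Suc N) \<xi>)" using a1 by (rule vagree_mono[OF p1, rotated]) simp
      show "vagree X (m + int N + 1) (vneg p X (w (H \<xi>))) (vneg p X (w (S N \<xi>)))"
        by (rule vagree_neg[OF p1 wQ[OF HQ[OF x]] wQ[OF SQ[OF x]]]) (use a2 in \<open>rule vagree_mono[OF p1, rotated]\<close>, simp)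
    qed
    moreover have "vadd p X (S (Suc N) \<xi>) (vneg p X (w (S N \<xi>))) = \<xi>"
      using S_Suc[OF x, of N] vadd_assoc[OF p1 x wQ[OF SQ[OF x]] vneg_QpX[OF p1 wQ[OF SQ[OF x]]]]
        vadd_neg[OF p1 wQ[OF SQ[OF x]]] vadd_zero[OF p1 x] by simp
    ultimately show "vagree X (m + int N + 1) (vadd p X (H \<xi>) (vneg p X (w (H \<xi>)))) \<xi>" by simp
  qed
qed

lemma Hu:
  assumes x: "\<xi> \<in> QpX p X"
  shows "H (vadd p X \<xi> (vneg p X (w \<xi>))) = \<xi>"
  using H_add[OF x vneg_QpX[OF p1 wQ[OF x]]] H_neg[OF wQ[OF x]] H_w[OF x] uH[OF x] by simp

end


theorem lemma3p6:
  fixes p :: nat and X :: "'x set" and A :: "'x oper set" and e f :: "'x oper"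
  assumes "prime p"
    and "countable X"
    and "closed_unital_subalgebra p X A"
    and "e \<in> A" and "f \<in> A"
    and "op_comp p X e e = e" and "op_comp p X f f = f"
    and "e \<noteq> op_zero p X"
    and "op_norm p X (op_diff p X e f) < 1 / op_norm p X e"
  shows "\<exists>g\<in>A. \<exists>h\<in>A. op_comp p X h g = op_id p X \<and> op_comp p X g h = op_id p X \<and>
           op_comp p X (op_comp p X h e) g = f"
proof -
  have p1: "p > 1" using assms(1) by (rule prime_gt_1_nat)
  have AB: "A \<subseteq> Bops p X" and idA: "op_id p X \<in> A"
    and addA: "\<And>S T. S \<in> A \<Longrightarrow> T \<in> A \<Longrightarrow> op_add p X S T \<in> A"
    and compA: "\<And>S T. S \<in> A \<Longrightarrow> T \<in> A \<Longrightarrow> op_comp p X S T \<in> A"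
    and smulA: "\<And>c T. c \<in> padic_int p \<Longrightarrow> T \<in> A \<Longrightarrow> op_smul p X c T \<in> A"
    and closA: "\<And>Ts T. (\<forall>n. Ts n \<in> A) \<Longrightarrow> T \<in> Bops p X \<Longrightarrow>
                 (\<lambda>n. op_norm p X (op_diff p X (Ts n) T)) \<longlonglongrightarrow> 0 \<Longrightarrow> T \<in> A"
    using assms(3) unfolding closed_unital_subalgebra_def by blast+
  have negA: "op_neg p X T \<in> A" if "T \<in> A" for T
  proof -
    have "T \<in> Bops p X" using AB that by blast
    then have "op_smul p X (negone p) T = op_neg p X T" by (rule op_neg_smul[OF p1])
    then show ?thesis using smulA[OF negone_int[OF p1] that] by simp
  qed
  have eB: "e \<in> Bops p X" and fB: "f \<in> Bops p X" using assms(4,5) AB by auto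
  define d where "d = op_diff p X e f"
  have dA: "d \<in> A" unfolding d_def op_diff_def using addA[OF assms(4) negA[OF assms(5)]] .
  have dB: "d \<in> Bops p X" using dA AB by auto
  obtain m0 where m0: "bnd p X e m0" using Bops_bnd_ex[OF p1 eB] by blast
  obtain a where a: "bnd p X e a" "\<not> bnd p X e (a - 1)" using bnd_least[OF p1 eB m0 assms(8)] by blast
  have ne: "op_norm p X e = real p powi a" by (rule ON_exact[OF p1 eB a])
  have a0: "a \<ge> 0"
  proof (rule ccontr)
    assume "\<not> a \<ge> 0"
    have "bnd p X (op_comp p X e e) (a + a)" by (rule bnd_comp[OF p1 eB eB a(1) a(1)])
    then have "bnd p X e (a + a)" using assms(6) by simp
    then have "bnd p X e (a - 1)" by (rule bnd_mono[OF p1]) (use \<open>\<not> a \<ge> 0\<close> in simp)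
    then show False using a(2) by blast
  qed
  obtain md where md: "bnd p X d md" using Bops_bnd_ex[OF p1 dB] by blast
  have "1 / op_norm p X e = real p powi (- a)" unfolding ne by (simp add: power_int_minus inverse_eq_divide)
  then have "op_norm p X d < real p powi (- a)" using assms(9) unfolding d_def by simp
  then have bd: "bnd p X d (- a - 1)" by (rule ON2[OF p1 dB md])
  have eQ: "\<And>\<xi>. \<xi> \<in> QpX p X \<Longrightarrow> e \<xi> \<in> QpX p X" using Bops_QpX[OF p1 eB] .
  have fQ: "\<And>\<xi>. \<xi> \<in> QpX p X \<Longrightarrow> f \<xi> \<in> QpX p X" using Bops_QpX[OF p1 fB] .
  have dQ: "\<And>\<xi>. \<xi> \<in> QpX p X \<Longrightarrow> d \<xi> \<in> QpX p X" using Bops_QpX[OF p1 dB] .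
  have d_app: "\<And>\<xi>. \<xi> \<in> QpX p X \<Longrightarrow> d \<xi> = vadd p X (e \<xi>) (vneg p X (f \<xi>))"
    unfolding d_def by (rule op_diff_apply[OF p1])
  have bf: "bnd p X f a"
    unfolding bnd_def
  proof (intro ballI allI impI)
    fix \<xi> n assume x: "\<xi> \<in> QpX p X" and l: "vlowb X \<xi> n"
    have le: "vlowb X (e \<xi>) (n - a)" using a(1) x l unfolding bnd_def by blast
    have "vlowb X (d \<xi>) (n - (- a - 1))" using bd x l unfolding bnd_def by blast
    then have "vlowb X (d \<xi>) (n - a)" by (rule vlowb_mono[OF p1, rotated]) (use a0 in simp)
    then have "vagree X (n - a) (e \<xi>) (f \<xi>)" using vsub_iff[OF p1 eQ[OF x] fQ[OF x]] d_app[OF x] by simp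
    moreover have "vagree X (n - a) (e \<xi>) (vzero X)" using le vlowb_agree[OF p1] by blast
    ultimately have "vagree X (n - a) (f \<xi>) (vzero X)" using vagree_sym[OF p1] vagree_trans[OF p1] by blast
    then show "vlowb X (f \<xi>) (n - a)" unfolding vlowb_agree[OF p1] .
  qed
  define w where "w = op_add p X (op_comp p X e d) (op_neg p X (op_comp p X d f))"
  have edA: "op_comp p X e d \<in> A" by (rule compA[OF assms(4) dA])
  have dfA: "op_comp p X d f \<in> A" by (rule compA[OF dA assms(5)])
  have wA: "w \<in> A" unfolding w_def by (rule addA[OF edA negA[OF dfA]])
  have wB: "w \<in> Bops p X" using wA AB by auto
  have bw: "bnd p X w (-1)"
  proof -
    have "bnd p X (op_comp p X e d) (a + (- a - 1))" by (rule bnd_comp[OF p1 eB dB a(1) bd])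
    then have 1: "bnd p X (op_comp p X e d) (-1)" by simp
    have "bnd p X (op_comp p X d f) ((- a - 1) + a)" by (rule bnd_comp[OF p1 dB fB bd bf])
    then have "bnd p X (op_comp p X d f) (-1)" by simp
    then have 2: "bnd p X (op_neg p X (op_comp p X d f)) (-1)" using bnd_neg[OF p1] dfA AB by blast
    show ?thesis unfolding w_def using bnd_add[OF p1 _ _ 1 2] edA negA[OF dfA] AB by blast
  qed
  define u where "u = op_add p X (op_id p X) (op_neg p X w)"
  have uA: "u \<in> A" unfolding u_def by (rule addA[OF idA negA[OF wA]])
  have SnA: "Sn p X w N \<in> A" for N
    by (induction N) (simp_all add: idA addA compA wA)
  have SB: "\<And>N. Sn p X w N \<in> Bops p X" using SnA AB by auto
  have hB: "hh p X w \<in> Bops p X" by (rule H_Bops[OF p1 wB bw SB])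
  have hA: "hh p X w \<in> A"
    by (rule closA[of "Sn p X w"]) (use SnA hB S_H_tendsto[OF p1 wB bw SB] in auto)
  have wQ: "\<And>\<xi>. \<xi> \<in> QpX p X \<Longrightarrow> w \<xi> \<in> QpX p X" using Bops_QpX[OF p1 wB] .
  have hQ: "\<And>\<xi>. \<xi> \<in> QpX p X \<Longrightarrow> hh p X w \<xi> \<in> QpX p X" using Bops_QpX[OF p1 hB] .
  have u_app: "\<And>\<xi>. \<xi> \<in> QpX p X \<Longrightarrow> u \<xi> = vadd p X \<xi> (vneg p X (w \<xi>))"
    unfolding u_def by (simp add: op_add_apply[OF p1] op_id_apply[OF p1] op_neg_apply[OF p1])
  have uQ: "u \<xi> \<in> QpX p X" if x: "\<xi> \<in> QpX p X" for \<xi>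
    using u_app[OF x] vadd_QpX[OF p1 x vneg_QpX[OF p1 wQ[OF x]]] by simp
  have w_app: "\<And>\<xi>. \<xi> \<in> QpX p X \<Longrightarrow> w \<xi> = vadd p X (e (d \<xi>)) (vneg p X (d (f \<xi>)))"
    unfolding w_def using dQ fQ by (simp add: op_add_apply[OF p1] op_comp_apply[OF p1] op_neg_apply[OF p1])
  have ee: "\<And>\<xi>. \<xi> \<in> QpX p X \<Longrightarrow> e (e \<xi>) = e \<xi>"
    using assms(6) op_comp_apply[OF p1] by metis
  have ff: "\<And>\<xi>. \<xi> \<in> QpX p X \<Longrightarrow> f (f \<xi>) = f \<xi>"
    using assms(7) op_comp_apply[OF p1] by metis
  have hu: "hh p X w (u \<xi>) = \<xi>" if x: "\<xi> \<in> QpX p X" for \<xi>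
    using Hu[OF p1 wB bw SB x] u_app[OF x] by simp
  have uh: "u (hh p X w \<xi>) = \<xi>" if x: "\<xi> \<in> QpX p X" for \<xi>
    using uH[OF p1 wB bw SB x] u_app[OF hQ[OF x]] by simp
  have key: "e (u \<xi>) = u (f \<xi>)" if x: "\<xi> \<in> QpX p X" for \<xi>
  proof -
    define fa where "fa = f \<xi>"
    define b where "b = e fa"
    define c where "c = e \<xi>"
    have faQ: "fa \<in> QpX p X" unfolding fa_def by (rule fQ[OF x])
    have bQ: "b \<in> QpX p X" unfolding b_def by (rule eQ[OF faQ])
    have cQ: "c \<in> QpX p X" unfolding c_def by (rule eQ[OF x])
    have ffa: "f fa = fa" unfolding fa_def by (rule ff[OF x])
    have eb: "e b = b" unfolding b_def by (rule ee[OF faQ])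
    have ec: "e c = c" unfolding c_def by (rule ee[OF x])
    have nbQ: "vneg p X b \<in> QpX p X" by (rule vneg_QpX[OF p1 bQ])
    have nfaQ: "vneg p X fa \<in> QpX p X" by (rule vneg_QpX[OF p1 faQ])
    have S1: "e (d \<xi>) = vadd p X c (vneg p X b)"
    proof -
      have "d \<xi> = vadd p X c (vneg p X fa)" unfolding c_def fa_def by (rule d_app[OF x])
      then have "e (d \<xi>) = vadd p X (e c) (e (vneg p X fa))" using Bops_add[OF p1 eB cQ nfaQ] by simp
      then show ?thesis using ec Bops_neg[OF p1 eB faQ] unfolding b_def by simp
    qed
    have S2: "d fa = vadd p X b (vneg p X fa)" using d_app[OF faQ] ffa unfolding b_def by simp
    have S3: "e (d fa) = vzero X"
    proof -
      have "e (d fa) = vadd p X (e b) (e (vneg p X fa))" using S2 Bops_add[OF p1 eB bQ nfaQ] by simp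
      also have "\<dots> = vadd p X b (vneg p X b)" using eb Bops_neg[OF p1 eB faQ] unfolding b_def by simp
      also have "\<dots> = vzero X" by (rule vadd_neg[OF p1 bQ])
      finally show ?thesis .
    qed
    have bfaQ: "vadd p X b (vneg p X fa) \<in> QpX p X" by (rule vadd_QpX[OF p1 bQ nfaQ])
    have wa: "w fa = vneg p X (vadd p X b (vneg p X fa))"
      using w_app[OF faQ] S3 S2 ffa vzero_add[OF p1 vneg_QpX[OF p1 bfaQ]] by simp
    have ua: "u fa = b"
    proof -
      have "u fa = vadd p X fa (vadd p X b (vneg p X fa))"
        using u_app[OF faQ] wa vneg_vneg[OF p1 bfaQ] by simp
      also have "\<dots> = vadd p X b (vadd p X fa (vneg p X fa))" by (rule vadd_left_comm[OF p1 faQ bQ nfaQ])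
      also have "\<dots> = b" using vadd_neg[OF p1 faQ] vadd_zero[OF p1 bQ] by simp
      finally show ?thesis .
    qed
    have cbQ: "vadd p X c (vneg p X b) \<in> QpX p X" by (rule vadd_QpX[OF p1 cQ nbQ])
    have wx: "w \<xi> = vadd p X (vadd p X c (vneg p X b)) (vneg p X (vadd p X b (vneg p X fa)))"
      using w_app[OF x] S1 S2 unfolding fa_def by simp
    have ewx: "e (w \<xi>) = vadd p X c (vneg p X b)"
    proof -
      have "e (w \<xi>) = vadd p X (e (vadd p X c (vneg p X b))) (e (vneg p X (vadd p X b (vneg p X fa))))"
        using wx Bops_add[OF p1 eB cbQ vneg_QpX[OF p1 bfaQ]] by simp
      also have "e (vadd p X c (vneg p X b)) = vadd p X c (vneg p X b)"
        using S1 ee[OF dQ[OF x]] by simp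
      also have "e (vneg p X (vadd p X b (vneg p X fa))) = vzero X"
        using Bops_neg[OF p1 eB bfaQ] S2 S3 vneg_zero[OF p1] by simp
      also have "vadd p X (vadd p X c (vneg p X b)) (vzero X) = vadd p X c (vneg p X b)"
        by (rule vadd_zero[OF p1 cbQ])
      finally show ?thesis .
    qed
    have "e (u \<xi>) = vadd p X c (vneg p X (e (w \<xi>)))"
      using u_app[OF x] Bops_add[OF p1 eB x vneg_QpX[OF p1 wQ[OF x]]] Bops_neg[OF p1 eB wQ[OF x]]
      unfolding c_def by simp
    also have "\<dots> = vadd p X c (vadd p X (vneg p X c) b)"
      using ewx vneg_vadd[OF p1 cQ nbQ] vneg_vneg[OF p1 bQ] by simp
    also have "\<dots> = b" by (rule vadd_neg_cancel[OF p1 cQ bQ])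
    finally show ?thesis using ua unfolding fa_def by simp
  qed
  show ?thesis
  proof (intro bexI conjI)
    show "op_comp p X (hh p X w) u = op_id p X"
      unfolding op_comp_def op_id_def by (rule restrict_ext) (simp add: hu)
    show "op_comp p X u (hh p X w) = op_id p X"
      unfolding op_comp_def op_id_def by (rule restrict_ext) (simp add: uh)
    show "op_comp p X (op_comp p X (hh p X w) e) u = f"
    proof (rule extensionalityI[of _ "QpX p X"])
      show "op_comp p X (op_comp p X (hh p X w) e) u \<in> extensional (QpX p X)" unfolding op_comp_def by simp
      show "f \<in> extensional (QpX p X)" by (rule Bops_ext[OF p1 fB])
      fix \<xi> assume x: "\<xi> \<in> QpX p X"
      have "op_comp p X (op_comp p X (hh p X w) e) u \<xi> = hh p X w (e (u \<xi>))"
        using x uQ[OF x] by (simp add: op_comp_apply[OF p1])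
      also have "\<dots> = hh p X w (u (f \<xi>))" using key[OF x] by simp
      also have "\<dots> = f \<xi>" by (rule hu[OF fQ[OF x]])
      finally show "op_comp p X (op_comp p X (hh p X w) e) u \<xi> = f \<xi>" .
    qed
  qed (use uA hA in auto)
qed


end
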